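(* Let $d\ge2$, $\overrightarrow{w}\in(0,\infty)^d$, $S_1=\sum_{i=1}^dw_i$ and $S_2=\sum_{i=1}^dw_i^2$. Let $F_1,\dots,F_d$ be continuous distribution functions, let $C,C^*$ be $d$-dimensional copulas, and set $H=C(F_1,\dots,F_d)$, $H^*=C^*(F_1,\dots,F_d)$. Then: (i) if $C\prec C^*$, then $\mathrm{SIX}(\overrightarrow{w},H)\le\mathrm{SIX}(\overrightarrow{w},H^* )$; (ii) $\displaystyle\frac{12\,l(\overrightarrow{w})-S_2}{S_1^2-S_2}\le\mathrm{SIX}(\overrightarrow{w},H)\le1$; (iii) the upper bound in (ii) is attained if and only if $H$ is comonotonic (i.e. $C(\overrightarrow{u})=\min\{u_1,\dots,u_d\}$); (iv) the lower bound in (ii) is attained if and only if $C$ is $\overrightarrow{w^*}$-CM.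
   Context: For a random vector $\overrightarrow{X}$ with distribution function $H$ and continuous marginals $F_1,\dots,F_d$, Spearman's rho of $(X_i,X_j)$ is $\rho_S(X_i,X_j)=12\,\mathrm{Cov}(F_i(X_i),F_j(X_j))$, and the herd behavior index is $\mathrm{SIX}(\overrightarrow{w},H)=\frac{\sum_{i<j}w_iw_j\rho_S(X_i,X_j)}{\sum_{i<j}w_iw_j}$ (it depends only on the copula of $H$). For copulas, $C\prec C^*$ means $C(\overrightarrow{u})\le C^*(\overrightarrow{u})$ and $\overline{C}(\overrightarrow{u})\le\overline{C^*}(\overrightarrow{u})$ for all $\overrightarrow{u}\in[0,1]^d$, where $\overline{C}$ is the joint survival function. A copula $C$ is $\overrightarrow{v}$-CM if $\overrightarrow{U}\sim C$ satisfies $P\left(\sum_{i}v_iU_i=\frac12\sum_i v_i\right)=1$. For $\overrightarrow{w}\in(0,\infty)^d$, define $\overrightarrow{w^*}$ by $w_i^*=w_i$ if $2w_i\le\sum_jw_j$ and $w_i^*=\sum_jw_j-w_i$ otherwise; and $l(\overrightarrow{w})=\frac1{12}\left[\left(2\max_iw_i-\sum_iw_i\right)_+\right]^2$ with $x_+=\max\{x,0\}$. *)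

theory Defs
  imports "HOL-Probability.Probability"
begin

text \<open>Vectors in R^d are functions nat => real; only coordinates i < d matter.\<close>

definition unit_cube :: "nat \<Rightarrow> (nat \<Rightarrow> real) set" where
  "unit_cube d = {u. \<forall>i<d. 0 \<le> u i \<and> u i \<le> 1}"

definition cont_df :: "(real \<Rightarrow> real) \<Rightarrow> bool" where
  "cont_df F \<longleftrightarrow> mono F \<and> continuous_on UNIV F \<and>
     (F \<longlongrightarrow> 0) at_bot \<and> (F \<longlongrightarrow> 1) at_top"

definition copula_measure :: "nat \<Rightarrow> (nat \<Rightarrow> real) measure \<Rightarrow> ((nat \<Rightarrow> real) \<Rightarrow> real) \<Rightarrow> bool" where
  "copula_measure d \<mu> C \<longleftrightarrow> prob_space \<mu> \<and>
     sets \<mu> = sets (Pi\<^sub>M {..<d} (\<lambda>_. borel)) \<and>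
     (\<forall>i<d. \<forall>t\<in>{0..1}. measure \<mu> {v \<in> space \<mu>. v i \<le> t} = t) \<and>
     (\<forall>u\<in>unit_cube d. C u = measure \<mu> {v \<in> space \<mu>. \<forall>i<d. v i \<le> u i})"

definition is_copula :: "nat \<Rightarrow> ((nat \<Rightarrow> real) \<Rightarrow> real) \<Rightarrow> bool" where
  "is_copula d C \<longleftrightarrow> (\<exists>\<mu>. copula_measure d \<mu> C)"

definition copula_distr :: "nat \<Rightarrow> ((nat \<Rightarrow> real) \<Rightarrow> real) \<Rightarrow> (nat \<Rightarrow> real) measure" where
  "copula_distr d C = (SOME \<mu>. copula_measure d \<mu> C)"

definition copula_surv :: "nat \<Rightarrow> ((nat \<Rightarrow> real) \<Rightarrow> real) \<Rightarrow> (nat \<Rightarrow> real) \<Rightarrow> real" where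
  "copula_surv d C u =
     measure (copula_distr d C) {v \<in> space (copula_distr d C). \<forall>i<d. v i > u i}"

definition copula_prec :: "nat \<Rightarrow> ((nat \<Rightarrow> real) \<Rightarrow> real) \<Rightarrow> ((nat \<Rightarrow> real) \<Rightarrow> real) \<Rightarrow> bool" where
  "copula_prec d C C' \<longleftrightarrow>
     (\<forall>u\<in>unit_cube d. C u \<le> C' u \<and> copula_surv d C u \<le> copula_surv d C' u)"

definition is_CM :: "nat \<Rightarrow> (nat \<Rightarrow> real) \<Rightarrow> ((nat \<Rightarrow> real) \<Rightarrow> real) \<Rightarrow> bool" where
  "is_CM d v C \<longleftrightarrow>
     measure (copula_distr d C)
       {u \<in> space (copula_distr d C). (\<Sum>i<d. v i * u i) = (\<Sum>i<d. v i) / 2} = 1"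

definition comonotonic_copula :: "nat \<Rightarrow> ((nat \<Rightarrow> real) \<Rightarrow> real) \<Rightarrow> bool" where
  "comonotonic_copula d C \<longleftrightarrow> (\<forall>u\<in>unit_cube d. C u = Min (u ` {..<d}))"

definition has_joint_df :: "nat \<Rightarrow> 'a measure \<Rightarrow> (nat \<Rightarrow> 'a \<Rightarrow> real) \<Rightarrow> ((nat \<Rightarrow> real) \<Rightarrow> real) \<Rightarrow> bool" where
  "has_joint_df d M X H \<longleftrightarrow> prob_space M \<and> (\<forall>i<d. X i \<in> borel_measurable M) \<and>
     (\<forall>x. measure M {\<omega> \<in> space M. \<forall>i<d. X i \<omega> \<le> x i} = H x)"

definition covariance :: "'a measure \<Rightarrow> ('a \<Rightarrow> real) \<Rightarrow> ('a \<Rightarrow> real) \<Rightarrow> real" where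
  "covariance M A B =
     (\<integral>\<omega>. (A \<omega> - (\<integral>\<omega>'. A \<omega>' \<partial>M)) * (B \<omega> - (\<integral>\<omega>'. B \<omega>' \<partial>M)) \<partial>M)"

definition spearman_rho :: "'a measure \<Rightarrow> (nat \<Rightarrow> real \<Rightarrow> real) \<Rightarrow> (nat \<Rightarrow> 'a \<Rightarrow> real) \<Rightarrow> nat \<Rightarrow> nat \<Rightarrow> real" where
  "spearman_rho M F X i j = 12 * covariance M (\<lambda>\<omega>. F i (X i \<omega>)) (\<lambda>\<omega>. F j (X j \<omega>))"

definition pairs_lt :: "nat \<Rightarrow> (nat \<times> nat) set" where
  "pairs_lt d = {(i, j). i < j \<and> j < d}"

definition SIX :: "nat \<Rightarrow> (nat \<Rightarrow> real) \<Rightarrow> 'a measure \<Rightarrow> (nat \<Rightarrow> real \<Rightarrow> real) \<Rightarrow> (nat \<Rightarrow> 'a \<Rightarrow> real) \<Rightarrow> real" where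
  "SIX d w M F X =
     (\<Sum>(i, j)\<in>pairs_lt d. w i * w j * spearman_rho M F X i j) / (\<Sum>(i, j)\<in>pairs_lt d. w i * w j)"

definition wstar :: "nat \<Rightarrow> (nat \<Rightarrow> real) \<Rightarrow> nat \<Rightarrow> real" where
  "wstar d w i = (if 2 * w i \<le> (\<Sum>j<d. w j) then w i else (\<Sum>j<d. w j) - w i)"

definition lfun :: "nat \<Rightarrow> (nat \<Rightarrow> real) \<Rightarrow> real" where
  "lfun d w = (1/12) * (max (2 * Max (w ` {..<d}) - (\<Sum>i<d. w i)) 0)\<^sup>2"

end

theory Submission
  imports Defs
begin

locale cop =
  fixes d :: nat and \<mu> :: "(nat \<Rightarrow> real) measure" and C :: "(nat \<Rightarrow> real) \<Rightarrow> real"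
  assumes cm: "copula_measure d \<mu> C"
begin

lemma sets_mu[measurable_cong]: "sets \<mu> = sets (Pi\<^sub>M {..<d} (\<lambda>_. borel))"
  using cm unfolding copula_measure_def by auto

lemma space_mu: "space \<mu> = PiE {..<d} (\<lambda>_. UNIV)"
  using sets_eq_imp_space_eq[OF sets_mu] by (simp add: space_PiM)

sublocale prob_space \<mu>
  using cm unfolding copula_measure_def by auto

lemma coord_meas[measurable]: "i < d \<Longrightarrow> (\<lambda>v. v i) \<in> borel_measurable \<mu>"
  by (simp add: measurable_cong_sets[OF sets_mu refl])

lemma marg: "i < d \<Longrightarrow> 0 \<le> t \<Longrightarrow> t \<le> 1 \<Longrightarrow> prob {v\<in>space \<mu>. v i \<le> t} = t"
  using cm unfolding copula_measure_def by auto

lemma C_eq: "u \<in> unit_cube d \<Longrightarrow> C u = prob {v\<in>space \<mu>. \<forall>i<d. v i \<le> u i}"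
  using cm unfolding copula_measure_def by auto

lemma AE_pos: "i < d \<Longrightarrow> AE v in \<mu>. 0 < v i"
proof -
  assume i: "i < d"
  have "prob {v\<in>space \<mu>. v i \<le> 0} = 0" using marg[OF i] by simp
  then have "AE v in \<mu>. v \<notin> {v\<in>space \<mu>. v i \<le> 0}"
    using i by (subst prob_eq_0[symmetric]) auto
  then show ?thesis by (auto elim!: AE_mp)
qed

lemma AE_lt1: "i < d \<Longrightarrow> AE v in \<mu>. v i < 1"
proof -
  assume i: "i < d"
  define p where "p = prob {v\<in>space \<mu>. 1 \<le> v i}"
  have le: "p \<le> e" if e: "0 < e" "e \<le> 1" for e
  proof -
    have "p \<le> prob {v\<in>space \<mu>. 1 - e < v i}"
      unfolding p_def using i e by (intro finite_measure_mono) auto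
    also have "{v\<in>space \<mu>. 1 - e < v i} = space \<mu> - {v\<in>space \<mu>. v i \<le> 1 - e}" by auto
    also have "prob \<dots> = 1 - prob {v\<in>space \<mu>. v i \<le> 1 - e}"
      using i by (intro prob_compl) auto
    also have "\<dots> = e" using marg[OF i, of "1 - e"] e by simp
    finally show ?thesis .
  qed
  have "p \<le> 0"
  proof (rule ccontr)
    assume "\<not> p \<le> 0"
    then have "0 < min (p/2) 1" by simp
    from le[OF this] show False using \<open>\<not> p \<le> 0\<close> by linarith
  qed
  then have "p = 0" unfolding p_def using measure_nonneg[of \<mu>] by (meson order_antisym)
  then have "AE v in \<mu>. v \<notin> {v\<in>space \<mu>. 1 \<le> v i}"
    unfolding p_def using i by (subst prob_eq_0[symmetric]) auto
  then show ?thesis by (auto elim!: AE_mp)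
qed

lemma AE_01: "AE v in \<mu>. \<forall>i<d. 0 < v i \<and> v i < 1"
proof -
  have "AE v in \<mu>. \<forall>i\<in>{..<d}. 0 < v i \<and> v i < 1"
    by (intro AE_finite_allI) (auto intro: AE_conjI AE_pos AE_lt1)
  then show ?thesis by auto
qed

lemma unif: "i < d \<Longrightarrow> distributed \<mu> lborel (\<lambda>v. v i) (\<lambda>x. indicator {0..1::real} x / measure lborel {0..1::real})"
  by (subst uniform_distributed_iff) (auto simp: marg)

lemma mean: "i < d \<Longrightarrow> expectation (\<lambda>v. v i) = 1/2"
  using uniform_distributed_expectation[OF unif] by simp

lemma var: "i < d \<Longrightarrow> variance (\<lambda>v. v i) = 1/12"
  using uniform_distributed_variance[OF unif] by simp

definition cv :: "nat \<Rightarrow> nat \<Rightarrow> real" where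
  "cv i j = (\<integral>v. (v i - 1/2) * (v j - 1/2) \<partial>\<mu>)"

definition Z :: "(nat \<Rightarrow> real) \<Rightarrow> (nat \<Rightarrow> real) \<Rightarrow> real" where
  "Z a v = (\<Sum>i<d. a i * (v i - 1/2))"

definition Q :: "(nat \<Rightarrow> real) \<Rightarrow> real" where
  "Q a = (\<integral>v. (Z a v)\<^sup>2 \<partial>\<mu>)"

lemma Z_meas[measurable]: "Z a \<in> borel_measurable \<mu>"
  unfolding Z_def by measurable

lemma AE_half: "AE v in \<mu>. \<forall>i<d. \<bar>v i - 1/2\<bar> \<le> 1/2"
  using AE_01 by eventually_elim (auto simp: abs_if)

lemma Z_bound: "AE v in \<mu>. \<bar>Z a v\<bar> \<le> (\<Sum>i<d. \<bar>a i\<bar>)"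
  using AE_half
proof (elim AE_mp, intro AE_I2 impI)
  fix v :: "nat \<Rightarrow> real" assume h: "\<forall>i<d. \<bar>v i - 1/2\<bar> \<le> 1/2"
  have "\<bar>Z a v\<bar> \<le> (\<Sum>i<d. \<bar>a i * (v i - 1/2)\<bar>)" unfolding Z_def by (rule sum_abs)
  also have "\<dots> \<le> (\<Sum>i<d. \<bar>a i\<bar>)"
  proof (rule sum_mono)
    fix i assume "i \<in> {..<d}"
    then have "\<bar>v i - 1/2\<bar> \<le> 1" using h by force
    then show "\<bar>a i * (v i - 1/2)\<bar> \<le> \<bar>a i\<bar>"
      by (simp add: abs_mult mult_left_le)
  qed
  finally show "\<bar>Z a v\<bar> \<le> (\<Sum>i<d. \<bar>a i\<bar>)" .
qed

lemma int_prod: "i < d \<Longrightarrow> j < d \<Longrightarrow> integrable \<mu> (\<lambda>v. (v i - 1/2) * (v j - 1/2))"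
proof (rule integrable_const_bound[where B=1])
  assume ij: "i < d" "j < d"
  show "AE x in \<mu>. norm ((x i - 1/2) * (x j - 1/2)) \<le> 1"
    using AE_half
  proof eventually_elim
    case (elim x)
    then have "\<bar>x i - 1/2\<bar> \<le> 1" "\<bar>x j - 1/2\<bar> \<le> 1" using ij by force+
    then show ?case by (simp add: abs_mult mult_le_one)
  qed
qed (use coord_meas in measurable)

lemma int_Z2: "integrable \<mu> (\<lambda>v. (Z a v)\<^sup>2)"
proof (rule integrable_const_bound[where B="(\<Sum>i<d. \<bar>a i\<bar>)\<^sup>2"])
  show "AE x in \<mu>. norm ((Z a x)\<^sup>2) \<le> (\<Sum>i<d. \<bar>a i\<bar>)\<^sup>2"
    using Z_bound[of a]
  proof eventually_elim
    case (elim x)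
    have "\<bar>Z a x\<bar>\<^sup>2 \<le> (\<Sum>i<d. \<bar>a i\<bar>)\<^sup>2" by (rule power_mono[OF elim]) simp
    then show ?case by simp
  qed
qed measurable

lemma int_ZY: "m < d \<Longrightarrow> integrable \<mu> (\<lambda>v. Z a v * (v m - 1/2))"
proof (rule integrable_const_bound[where B="(\<Sum>i<d. \<bar>a i\<bar>)"])
  assume m: "m < d"
  show "AE x in \<mu>. norm (Z a x * (x m - 1/2)) \<le> (\<Sum>i<d. \<bar>a i\<bar>)"
    using Z_bound[of a] AE_half 
  proof (elim AE_mp, intro AE_I2 impI)
    fix x assume h1: "\<bar>Z a x\<bar> \<le> (\<Sum>i<d. \<bar>a i\<bar>)" and h2: "\<forall>i<d. \<bar>x i - 1/2\<bar> \<le> 1/2"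
    have "\<bar>x m - 1/2\<bar> \<le> 1" using h2 m by force
    then have "\<bar>Z a x\<bar> * \<bar>x m - 1/2\<bar> \<le> \<bar>Z a x\<bar> * 1" by (intro mult_left_mono) auto
    then show "norm (Z a x * (x m - 1/2)) \<le> (\<Sum>i<d. \<bar>a i\<bar>)" using h1 by (simp add: abs_mult)
  qed
qed (use coord_meas in measurable)

lemma cv_sym: "cv i j = cv j i"
  unfolding cv_def by (simp add: mult.commute)

lemma cv_diag: "i < d \<Longrightarrow> cv i i = 1/12"
  using var[of i] mean[of i] unfolding cv_def by (simp add: power2_eq_square)

lemma Z_sq: "(Z a v)\<^sup>2 = (\<Sum>i<d. \<Sum>j<d. a i * a j * ((v i - 1/2) * (v j - 1/2)))"
  unfolding Z_def power2_eq_square sum_product by (intro sum.cong refl) (simp add: ac_simps)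

lemma Q_expand: "Q a = (\<Sum>i<d. \<Sum>j<d. a i * a j * cv i j)"
proof -
  have "Q a = (\<integral>v. (\<Sum>i<d. \<Sum>j<d. a i * a j * ((v i - 1/2) * (v j - 1/2))) \<partial>\<mu>)"
    unfolding Q_def Z_sq ..
  also have "\<dots> = (\<Sum>i<d. \<integral>v. (\<Sum>j<d. a i * a j * ((v i - 1/2) * (v j - 1/2))) \<partial>\<mu>)"
    by (subst Bochner_Integration.integral_sum) (auto intro!: integrable_sum integrable_mult_right int_prod)
  also have "\<dots> = (\<Sum>i<d. \<Sum>j<d. \<integral>v. a i * a j * ((v i - 1/2) * (v j - 1/2)) \<partial>\<mu>)"
    by (intro sum.cong refl, subst Bochner_Integration.integral_sum) (auto intro!: integrable_mult_right int_prod)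
  also have "\<dots> = (\<Sum>i<d. \<Sum>j<d. a i * a j * cv i j)"
    unfolding cv_def by simp
  finally show ?thesis .
qed

lemma ZY: "m < d \<Longrightarrow> (\<integral>v. Z a v * (v m - 1/2) \<partial>\<mu>) = (\<Sum>i<d. a i * cv i m)"
proof -
  assume m: "m < d"
  have "(\<integral>v. Z a v * (v m - 1/2) \<partial>\<mu>) = (\<integral>v. (\<Sum>i<d. a i * ((v i - 1/2) * (v m - 1/2))) \<partial>\<mu>)"
    unfolding Z_def sum_distrib_right by (simp add: ac_simps)
  also have "\<dots> = (\<Sum>i<d. \<integral>v. a i * ((v i - 1/2) * (v m - 1/2)) \<partial>\<mu>)"
    using m by (subst Bochner_Integration.integral_sum) (auto intro!: integrable_mult_right int_prod)
  also have "\<dots> = (\<Sum>i<d. a i * cv i m)"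
    unfolding cv_def by simp
  finally show ?thesis .
qed

lemma Q_nonneg: "0 \<le> Q a"
  unfolding Q_def by simp

lemma Q_zero_iff: "Q a = 0 \<longleftrightarrow> (AE v in \<mu>. Z a v = 0)"
  unfolding Q_def by (subst integral_nonneg_eq_0_iff_AE) (auto intro: int_Z2)

lemma Q_zero_ZY: "Q a = 0 \<Longrightarrow> m < d \<Longrightarrow> (\<Sum>i<d. a i * cv i m) = 0"
proof -
  assume q: "Q a = 0" and m: "m < d"
  have "AE v in \<mu>. Z a v * (v m - 1/2) = 0"
    using q unfolding Q_zero_iff by eventually_elim simp
  then have "(\<integral>v. Z a v * (v m - 1/2) \<partial>\<mu>) = (\<integral>v. 0 \<partial>\<mu>)"
    by (intro integral_cong_AE) (use m in auto)
  then show ?thesis using ZY[OF m] by simp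
qed

lemma sq_int: "i < d \<Longrightarrow> j < d \<Longrightarrow> (\<integral>v. ((v i - 1/2) + s * (v j - 1/2))\<^sup>2 \<partial>\<mu>) = cv i i + s\<^sup>2 * cv j j + 2 * s * cv i j"
proof -
  assume ij: "i < d" "j < d"
  have "(\<integral>v. ((v i - 1/2) + s * (v j - 1/2))\<^sup>2 \<partial>\<mu>) =
     (\<integral>v. (v i - 1/2) * (v i - 1/2) + (s\<^sup>2 * ((v j - 1/2) * (v j - 1/2)) + 2 * s * ((v i - 1/2) * (v j - 1/2))) \<partial>\<mu>)"
    by (intro Bochner_Integration.integral_cong refl) (simp add: power2_eq_square algebra_simps)
  also have "\<dots> = cv i i + s\<^sup>2 * cv j j + 2 * s * cv i j"
    unfolding cv_def using ij
    by (simp add: integrable_add integrable_mult_right int_prod)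
  finally show ?thesis .
qed

lemma cv_le: "i < d \<Longrightarrow> j < d \<Longrightarrow> cv i j \<le> 1/12"
proof -
  assume ij: "i < d" "j < d"
  have "0 \<le> (\<integral>v. ((v i - 1/2) + (-1) * (v j - 1/2))\<^sup>2 \<partial>\<mu>)" by simp
  then show ?thesis unfolding sq_int[OF ij] using cv_diag ij by simp
qed

lemma cv_ge: "i < d \<Longrightarrow> j < d \<Longrightarrow> -1/12 \<le> cv i j"
proof -
  assume ij: "i < d" "j < d"
  have "0 \<le> (\<integral>v. ((v i - 1/2) + 1 * (v j - 1/2))\<^sup>2 \<partial>\<mu>)" by simp
  then show ?thesis unfolding sq_int[OF ij] using cv_diag ij by simp
qed

lemma cv_eq: "i < d \<Longrightarrow> j < d \<Longrightarrow> cv i j = 1/12 \<Longrightarrow> AE v in \<mu>. v i = v j"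
proof -
  assume ij: "i < d" "j < d" and c: "cv i j = 1/12"
  have "(\<integral>v. ((v i - 1/2) + (-1) * (v j - 1/2))\<^sup>2 \<partial>\<mu>) = 0"
    unfolding sq_int[OF ij] using cv_diag[of i] cv_diag[of j] ij c by simp
  then have "AE v in \<mu>. ((v i - 1/2) + (-1) * (v j - 1/2))\<^sup>2 = 0"
  proof (subst (asm) integral_nonneg_eq_0_iff_AE)
    show "integrable \<mu> (\<lambda>v. ((v i - 1/2) + (-1) * (v j - 1/2))\<^sup>2)"
    proof (rule integrable_const_bound[where B=1])
      show "AE x in \<mu>. norm (((x i - 1/2) + (-1) * (x j - 1/2))\<^sup>2) \<le> 1"
        using AE_01
      proof eventually_elim
        case (elim x)
        then have "\<bar>x i - x j\<bar> \<le> 1" using ij by (smt (verit))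
        then have "\<bar>x i - x j\<bar>\<^sup>2 \<le> 1\<^sup>2" by (intro power_mono) auto
        then show ?case by simp
      qed
    qed (use ij in measurable)
  qed auto
  then show ?thesis by eventually_elim simp
qed

lemma int_coord: "i < d \<Longrightarrow> integrable \<mu> (\<lambda>v. v i)"
proof (rule integrable_const_bound[where B=1])
  assume i: "i < d"
  show "AE x in \<mu>. norm (x i) \<le> 1"
    using AE_01 by eventually_elim (use i in auto)
qed (use coord_meas in measurable)

lemma int_mult: "i < d \<Longrightarrow> j < d \<Longrightarrow> integrable \<mu> (\<lambda>v. v i * v j)"
proof (rule integrable_const_bound[where B=1])
  assume ij: "i < d" "j < d"
  show "AE x in \<mu>. norm (x i * x j) \<le> 1"
    using AE_01
  proof eventually_elim
    case (elim x)
    then have "0 < x i" "x i < 1" "0 < x j" "x j < 1" using ij by auto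
    then show ?case by (simp add: abs_mult mult_le_one)
  qed
qed (use coord_meas in measurable)

lemma cv_alt: "i < d \<Longrightarrow> j < d \<Longrightarrow> cv i j = (\<integral>v. v i * v j \<partial>\<mu>) - 1/4"
proof -
  assume ij: "i < d" "j < d"
  have "cv i j = (\<integral>v. v i * v j - (1/2) * v i - (1/2) * v j + 1/4 \<partial>\<mu>)"
    unfolding cv_def by (intro Bochner_Integration.integral_cong refl) (simp add: algebra_simps)
  also have "\<dots> = (\<integral>v. v i * v j \<partial>\<mu>) - (1/2) * (\<integral>v. v i \<partial>\<mu>) - (1/2) * (\<integral>v. v j \<partial>\<mu>) + 1/4"
    using ij int_mult int_coord by (simp add: prob_space)
  also have "\<dots> = (\<integral>v. v i * v j \<partial>\<mu>) - 1/4"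
    using mean[of i] mean[of j] ij by simp
  finally show ?thesis .
qed

lemma E_prod: "i < d \<Longrightarrow> j < d \<Longrightarrow> ennreal (\<integral>v. v i * v j \<partial>\<mu>) =
  (\<integral>\<^sup>+ p. indicator ({0..1::real}\<times>{0..1::real}) p * ennreal (prob {v\<in>space \<mu>. fst p < v i \<and> snd p < v j}) \<partial>(lborel \<Otimes>\<^sub>M lborel))"
proof -
  assume ij: "i < d" "j < d"
  define g where "g v p = indicator ({0..1::real}\<times>{0..1::real}) p * (indicator {v. fst p < v i \<and> snd p < v j} v :: ennreal)" for v :: "nat \<Rightarrow> real" and p
  interpret L: pair_sigma_finite \<mu> "lborel \<Otimes>\<^sub>M lborel"
    by (intro pair_sigma_finite.intro sigma_finite_measure_axioms) (intro sigma_finite_pair_measure lborel.sigma_finite_measure_axioms)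
  have "ennreal (\<integral>v. v i * v j \<partial>\<mu>) = (\<integral>\<^sup>+ v. ennreal (v i * v j) \<partial>\<mu>)"
  proof (intro nn_integral_eq_integral[symmetric] int_mult ij)
    show "AE x in \<mu>. 0 \<le> x i * x j" using AE_01
    proof eventually_elim
      case (elim x)
      then have "0 < x i" "0 < x j" using ij by auto
      then show ?case by simp
    qed
  qed
  also have "\<dots> = (\<integral>\<^sup>+ v. (\<integral>\<^sup>+ p. g v p \<partial>(lborel \<Otimes>\<^sub>M lborel)) \<partial>\<mu>)"
  proof (rule nn_integral_cong_AE)
    show "AE v in \<mu>. ennreal (v i * v j) = (\<integral>\<^sup>+ p. g v p \<partial>(lborel \<Otimes>\<^sub>M lborel))"
      using AE_01
    proof eventually_elim
      case (elim v)
      then have b: "0 < v i" "v i < 1" "0 < v j" "v j < 1" using ij by auto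
      have "(\<integral>\<^sup>+ p. g v p \<partial>(lborel \<Otimes>\<^sub>M lborel)) = (\<integral>\<^sup>+ p. indicator ({0..<v i} \<times> {0..<v j}) p \<partial>(lborel \<Otimes>\<^sub>M lborel))"
        unfolding g_def using b by (intro nn_integral_cong) (auto split: split_indicator)
      also have "\<dots> = emeasure (lborel \<Otimes>\<^sub>M lborel) ({0..<v i} \<times> {0..<v j})"
        by (intro nn_integral_indicator) simp
      also have "\<dots> = ennreal (v i) * ennreal (v j)"
        using b by (simp add: lborel.emeasure_pair_measure_Times)
      finally show ?case using b by (simp add: ennreal_mult)
    qed
  qed
  also have "\<dots> = (\<integral>\<^sup>+ p. (\<integral>\<^sup>+ v. g v p \<partial>\<mu>) \<partial>(lborel \<Otimes>\<^sub>M lborel))"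
  proof (rule L.Fubini'[symmetric])
    show "case_prod g \<in> borel_measurable (\<mu> \<Otimes>\<^sub>M (lborel \<Otimes>\<^sub>M lborel))"
      unfolding g_def using ij by measurable
  qed
  also have "\<dots> = (\<integral>\<^sup>+ p. indicator ({0..1::real}\<times>{0..1::real}) p * ennreal (prob {v\<in>space \<mu>. fst p < v i \<and> snd p < v j}) \<partial>(lborel \<Otimes>\<^sub>M lborel))"
  proof (rule nn_integral_cong)
    fix p :: "real \<times> real"
    have "(\<integral>\<^sup>+ v. g v p \<partial>\<mu>) = (\<integral>\<^sup>+ v. indicator ({0..1::real}\<times>{0..1::real}) p * indicator {v\<in>space \<mu>. fst p < v i \<and> snd p < v j} v \<partial>\<mu>)"
      unfolding g_def by (intro nn_integral_cong) (auto split: split_indicator)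
    also have "\<dots> = indicator ({0..1::real}\<times>{0..1::real}) p * emeasure \<mu> {v\<in>space \<mu>. fst p < v i \<and> snd p < v j}"
      using ij by (intro nn_integral_cmult_indicator) measurable
    finally show "(\<integral>\<^sup>+ v. g v p \<partial>\<mu>) = indicator ({0..1::real}\<times>{0..1::real}) p * ennreal (prob {v\<in>space \<mu>. fst p < v i \<and> snd p < v j})"
      by (simp add: emeasure_eq_measure)
  qed
  finally show ?thesis .
qed

lemma sets_all_lt: "(\<And>k. k < d \<Longrightarrow> {v\<in>space \<mu>. P k (v k)} \<in> sets \<mu>) \<Longrightarrow> {v\<in>space \<mu>. \<forall>k<d. P k (v k)} \<in> sets \<mu>"
proof -
  assume h: "\<And>k. k < d \<Longrightarrow> {v\<in>space \<mu>. P k (v k)} \<in> sets \<mu>"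
  have "{v\<in>space \<mu>. \<forall>k<d. P k (v k)} = space \<mu> \<inter> (\<Inter>k\<in>{..<d}. {v\<in>space \<mu>. P k (v k)})" by auto
  also have "\<dots> \<in> sets \<mu>"
  proof (cases "d = 0")
    case True then show ?thesis by simp
  next
    case False then show ?thesis using h by (intro sets.Int sets.top sets.finite_INT) auto
  qed
  finally show ?thesis .
qed

lemma surv_pair:
  assumes ij: "i < d" "j < d" "i \<noteq> j" and st: "0 \<le> s" "0 \<le> t"
    and u: "u i = s" "u j = t" "\<forall>k<d. k \<noteq> i \<and> k \<noteq> j \<longrightarrow> u k = 0"
  shows "prob {v\<in>space \<mu>. s < v i \<and> t < v j} = prob {v\<in>space \<mu>. \<forall>k<d. u k < v k}"
proof (rule measure_eq_AE)
  show "AE v in \<mu>. (v \<in> {v\<in>space \<mu>. s < v i \<and> t < v j}) = (v \<in> {v\<in>space \<mu>. \<forall>k<d. u k < v k})"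
    using AE_01
  proof eventually_elim
    case (elim v)
    show ?case
    proof
      assume "v \<in> {v\<in>space \<mu>. s < v i \<and> t < v j}"
      then have a: "s < v i" "t < v j" "v \<in> space \<mu>" by auto
      have "u k < v k" if "k < d" for k
      proof -
        consider "k = i" | "k = j" | "k \<noteq> i \<and> k \<noteq> j" by blast
        then show ?thesis
          by cases (use a u elim that in auto)
      qed
      then show "v \<in> {v\<in>space \<mu>. \<forall>k<d. u k < v k}" using a by auto
    next
      assume "v \<in> {v\<in>space \<mu>. \<forall>k<d. u k < v k}"
      then have h: "\<forall>k<d. u k < v k" "v \<in> space \<mu>" by auto
      have "s < v i" using h(1)[rule_format, of i] ij u by simp
      moreover have "t < v j" using h(1)[rule_format, of j] ij u by simp
      ultimately show "v \<in> {v\<in>space \<mu>. s < v i \<and> t < v j}" using h(2) by simp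
    qed
  qed
  show "{v\<in>space \<mu>. s < v i \<and> t < v j} \<in> sets \<mu>" using ij by measurable
  show "{v\<in>space \<mu>. \<forall>k<d. u k < v k} \<in> sets \<mu>" by (rule sets_all_lt) measurable
qed

lemma como_half:
  assumes H: "\<forall>u\<in>unit_cube d. C u = Min (u ` {..<d})" and ij: "i < d" "j < d"
  shows "AE v in \<mu>. \<forall>q\<in>\<rat> \<inter> {0..1}. \<not> (v i \<le> q \<and> q < v j)"
proof (rule AE_ball_countable')
  show "countable (\<rat> \<inter> {0..1::real})" by (intro countable_Int1 countable_rat)
next
  fix q :: real assume q: "q \<in> \<rat> \<inter> {0..1}"
  then have q01: "0 \<le> q" "q \<le> 1" by auto
  define u where "u = (\<lambda>k. if k = i \<or> k = j then q else (1::real))"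
  have uc: "u \<in> unit_cube d" using q01 unfolding u_def unit_cube_def by auto
  have "Min (u ` {..<d}) = q"
  proof (rule Min_eqI)
    show "finite (u ` {..<d})" by simp
    show "\<And>y. y \<in> u ` {..<d} \<Longrightarrow> q \<le> y" using q01 by (auto simp: u_def)
    have "u i = q" by (simp add: u_def)
    then show "q \<in> u ` {..<d}" using ij by (intro rev_image_eqI[of i]) auto
  qed
  then have "C u = q" using H uc by simp
  then have "q = prob {v\<in>space \<mu>. \<forall>k<d. v k \<le> u k}" using C_eq uc by simp
  also have "\<dots> = prob {v\<in>space \<mu>. v i \<le> q \<and> v j \<le> q}"
  proof (rule measure_eq_AE)
    show "AE v in \<mu>. (v \<in> {v\<in>space \<mu>. \<forall>k<d. v k \<le> u k}) = (v \<in> {v\<in>space \<mu>. v i \<le> q \<and> v j \<le> q})"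
      using AE_01
    proof eventually_elim
      case (elim v)
      show ?case
      proof
        assume "v \<in> {v\<in>space \<mu>. \<forall>k<d. v k \<le> u k}"
        then show "v \<in> {v\<in>space \<mu>. v i \<le> q \<and> v j \<le> q}"
        proof -
          assume h: "v \<in> {v\<in>space \<mu>. \<forall>k<d. v k \<le> u k}"
          then have "v i \<le> u i" "v j \<le> u j" "v \<in> space \<mu>" using ij by auto
          then show ?thesis by (simp add: u_def)
        qed
      next
        assume "v \<in> {v\<in>space \<mu>. v i \<le> q \<and> v j \<le> q}"
        then have a: "v i \<le> q" "v j \<le> q" "v \<in> space \<mu>" by auto
        have "v k \<le> u k" if "k < d" for k
        proof (cases "k = i \<or> k = j")
          case True then show ?thesis using a by (auto simp: u_def)
        next
          case False
          then have "u k = 1" by (simp add: u_def)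
          moreover have "v k < 1" using elim that by auto
          ultimately show ?thesis by simp
        qed
        then show "v \<in> {v\<in>space \<mu>. \<forall>k<d. v k \<le> u k}" using a by auto
      qed
    qed
    show "{v\<in>space \<mu>. \<forall>k<d. v k \<le> u k} \<in> sets \<mu>" by (rule sets_all_lt) measurable
    show "{v\<in>space \<mu>. v i \<le> q \<and> v j \<le> q} \<in> sets \<mu>" using ij by measurable
  qed
  finally have both: "prob {v\<in>space \<mu>. v i \<le> q \<and> v j \<le> q} = q" by simp
  have "prob ({v\<in>space \<mu>. v i \<le> q} - {v\<in>space \<mu>. v i \<le> q \<and> v j \<le> q}) =
      prob {v\<in>space \<mu>. v i \<le> q} - prob {v\<in>space \<mu>. v i \<le> q \<and> v j \<le> q}"
    by (rule finite_measure_Diff) (use ij in auto)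
  also have "\<dots> = 0" using both marg[OF ij(1) q01] by simp
  also have "{v\<in>space \<mu>. v i \<le> q} - {v\<in>space \<mu>. v i \<le> q \<and> v j \<le> q} = {v\<in>space \<mu>. v i \<le> q \<and> q < v j}"
    by auto
  finally have "AE v in \<mu>. v \<notin> {v\<in>space \<mu>. v i \<le> q \<and> q < v j}"
    using ij by (subst prob_eq_0[symmetric]) auto
  then show "AE v in \<mu>. \<not> (v i \<le> q \<and> q < v j)" by (auto elim!: AE_mp)
qed

lemma como1:
  assumes H: "\<forall>u\<in>unit_cube d. C u = Min (u ` {..<d})" and ij: "i < d" "j < d"
  shows "AE v in \<mu>. v i = v j"
  using como_half[OF H ij] como_half[OF H ij(2,1)] AE_01
proof eventually_elim
  case (elim v)
  have b: "0 < v i" "v i < 1" "0 < v j" "v j < 1" using elim(3) ij by auto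
  show ?case
  proof (rule ccontr)
    assume "v i \<noteq> v j"
    then consider "v i < v j" | "v j < v i" by linarith
    then show False
    proof cases
      case 1
      then obtain q where "q \<in> \<rat>" "v i < q" "q < v j" using Rats_dense_in_real by blast
      then have "q \<in> \<rat> \<inter> {0..1}" using b by auto
      then have "\<not> (v i \<le> q \<and> q < v j)" using elim(1) by blast
      then show False using \<open>v i < q\<close> \<open>q < v j\<close> by simp
    next
      case 2
      then obtain q where "q \<in> \<rat>" "v j < q" "q < v i" using Rats_dense_in_real by blast
      then have "q \<in> \<rat> \<inter> {0..1}" using b by auto
      then have "\<not> (v j \<le> q \<and> q < v i)" using elim(2) by blast
      then show False using \<open>v j < q\<close> \<open>q < v i\<close> by simp
    qed
  qed
qed

lemma como2:
  assumes H: "\<forall>i<d. AE v in \<mu>. v i = v 0" and d: "0 < d" and u: "u \<in> unit_cube d"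
  shows "C u = Min (u ` {..<d})"
proof -
  have fin: "finite (u ` {..<d})" "u ` {..<d} \<noteq> {}" using d by auto
  have Min01: "0 \<le> Min (u ` {..<d})" "Min (u ` {..<d}) \<le> 1"
    using Min_in[OF fin] u unfolding unit_cube_def by auto
  have AEall: "AE v in \<mu>. \<forall>i\<in>{..<d}. v i = v 0"
    using H by (intro AE_finite_allI) auto
  have "C u = prob {v\<in>space \<mu>. \<forall>k<d. v k \<le> u k}" using C_eq u by simp
  also have "\<dots> = prob {v\<in>space \<mu>. v 0 \<le> Min (u ` {..<d})}"
  proof (rule measure_eq_AE)
    show "AE v in \<mu>. (v \<in> {v\<in>space \<mu>. \<forall>k<d. v k \<le> u k}) = (v \<in> {v\<in>space \<mu>. v 0 \<le> Min (u ` {..<d})})"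
      using AEall
    proof eventually_elim
      case (elim v)
      have "(\<forall>k<d. v k \<le> u k) \<longleftrightarrow> (\<forall>k\<in>{..<d}. v 0 \<le> u k)" using elim by (metis lessThan_iff)
      also have "\<dots> \<longleftrightarrow> (\<forall>a\<in>u ` {..<d}. v 0 \<le> a)" by blast
      also have "\<dots> \<longleftrightarrow> v 0 \<le> Min (u ` {..<d})" using Min_ge_iff[OF fin] by simp
      finally show ?case by blast
    qed
    show "{v\<in>space \<mu>. \<forall>k<d. v k \<le> u k} \<in> sets \<mu>" by (rule sets_all_lt) measurable
    show "{v\<in>space \<mu>. v 0 \<le> Min (u ` {..<d})} \<in> sets \<mu>" using d by measurable
  qed
  also have "\<dots> = Min (u ` {..<d})" using marg[OF d Min01] .
  finally show ?thesis .
qed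


lemma cm_iff: "prob {v\<in>space \<mu>. (\<Sum>i<d. a i * v i) = (\<Sum>i<d. a i) / 2} = 1 \<longleftrightarrow> Q a = 0"
proof -
  have Z_alt: "Z a v = (\<Sum>i<d. a i * v i) - (\<Sum>i<d. a i) / 2" for v
    unfolding Z_def by (simp add: algebra_simps sum_subtractf sum_divide_distrib)
  have "prob {v\<in>space \<mu>. (\<Sum>i<d. a i * v i) = (\<Sum>i<d. a i) / 2} = 1 \<longleftrightarrow>
      (AE v in \<mu>. v \<in> {v\<in>space \<mu>. (\<Sum>i<d. a i * v i) = (\<Sum>i<d. a i) / 2})"
  proof (rule prob_eq_1)
    have sm[measurable]: "(\<lambda>v. \<Sum>i<d. a i * v i) \<in> borel_measurable \<mu>"
    proof (rule borel_measurable_sum)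
      fix i assume "i \<in> {..<d}"
      then have "i < d" by simp
      then show "(\<lambda>v. a i * v i) \<in> borel_measurable \<mu>" by measurable
    qed
    show "{v\<in>space \<mu>. (\<Sum>i<d. a i * v i) = (\<Sum>i<d. a i) / 2} \<in> sets \<mu>" by measurable
  qed
  also have "\<dots> \<longleftrightarrow> (AE v in \<mu>. Z a v = 0)"
    by (intro AE_cong) (simp add: Z_alt)
  finally show ?thesis using Q_zero_iff by simp
qed

lemma box_val: "prob {v\<in>space \<mu>. \<forall>i<d. v i \<le> u i} =
    (if \<exists>i<d. u i < 0 then 0 else C (\<lambda>i. min (u i) 1))"
proof (cases "\<exists>i<d. u i < 0")
  case True
  then obtain i where i: "i < d" "u i < 0" by auto
  have "prob {v\<in>space \<mu>. \<forall>i<d. v i \<le> u i} \<le> prob {v\<in>space \<mu>. v i \<le> 0}"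
  proof (rule finite_measure_mono)
    show "{v\<in>space \<mu>. \<forall>i<d. v i \<le> u i} \<subseteq> {v\<in>space \<mu>. v i \<le> 0}"
      using i by (auto dest!: spec[of _ i])
    show "{v\<in>space \<mu>. v i \<le> 0} \<in> sets \<mu>" using i by measurable
  qed
  also have "\<dots> = 0" using marg[OF i(1), of 0] by simp
  finally show ?thesis using True measure_nonneg[of \<mu>] by (simp add: order_antisym)
next
  case False
  then have u0: "\<forall>i<d. 0 \<le> u i" by (meson not_less)
  have uc: "(\<lambda>i. min (u i) 1) \<in> unit_cube d" using u0 unfolding unit_cube_def by auto
  have "prob {v\<in>space \<mu>. \<forall>i<d. v i \<le> u i} = prob {v\<in>space \<mu>. \<forall>i<d. v i \<le> min (u i) 1}"
  proof (rule measure_eq_AE)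
    show "AE v in \<mu>. (v \<in> {v\<in>space \<mu>. \<forall>i<d. v i \<le> u i}) = (v \<in> {v\<in>space \<mu>. \<forall>i<d. v i \<le> min (u i) 1})"
      using AE_01
    proof eventually_elim
      case (elim v)
      have "(\<forall>i<d. v i \<le> u i) \<longleftrightarrow> (\<forall>i<d. v i \<le> min (u i) 1)"
      proof (intro iffI allI impI)
        fix i assume "\<forall>i<d. v i \<le> u i" "i < d"
        then show "v i \<le> min (u i) 1" using elim by (metis less_imp_le min.bounded_iff)
      next
        fix i assume "\<forall>i<d. v i \<le> min (u i) 1" "i < d"
        then show "v i \<le> u i" by (metis min.bounded_iff)
      qed
      then show ?case by simp
    qed
    show "{v\<in>space \<mu>. \<forall>i<d. v i \<le> u i} \<in> sets \<mu>" by (rule sets_all_lt) measurable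
    show "{v\<in>space \<mu>. \<forall>i<d. v i \<le> min (u i) 1} \<in> sets \<mu>" by (rule sets_all_lt) measurable
  qed
  also have "\<dots> = C (\<lambda>i. min (u i) 1)" using C_eq[OF uc] by simp
  finally show ?thesis using False by (simp only: if_False)
qed

end

lemma cop_unique:
  assumes c1: "copula_measure d \<mu>1 C" and c2: "copula_measure d \<mu>2 C"
  shows "\<mu>1 = \<mu>2"
proof -
  interpret A: cop d \<mu>1 C by (rule cop.intro[OF c1])
  interpret B: cop d \<mu>2 C by (rule cop.intro[OF c2])
  define \<Omega> where "\<Omega> = PiE {..<d} (\<lambda>_. UNIV::real set)"
  define G where "G = range (\<lambda>u::nat\<Rightarrow>real. {f\<in>\<Omega>. \<forall>i<d. f i \<le> u i})"
  have GP: "{{f\<in>{..<d} \<rightarrow>\<^sub>E (UNIV::real set). \<forall>i\<in>{..<d}. f i \<in> A i} | A. A \<in> {..<d} \<rightarrow> range atMost} = G"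
  proof (intro equalityI subsetI)
    fix X assume "X \<in> {{f\<in>{..<d} \<rightarrow>\<^sub>E (UNIV::real set). \<forall>i\<in>{..<d}. f i \<in> A i} | A. A \<in> {..<d} \<rightarrow> range atMost}"
    then obtain A where X: "X = {f\<in>(\<Pi>\<^sub>E i\<in>{..<d}. UNIV). \<forall>i\<in>{..<d}. f i \<in> A i}" and A: "A \<in> Pi {..<d} (\<lambda>_. range atMost)"
      by blast
    define u where "u i = (SOME t. A i = {..t})" for i
    have "A i = {..u i}" if "i < d" for i
    proof -
      have "\<exists>t. A i = {..t}" using A that by auto
      then show ?thesis unfolding u_def by (rule someI_ex)
    qed
    then have "X = {f\<in>\<Omega>. \<forall>i<d. f i \<le> u i}" unfolding X \<Omega>_def by auto
    then show "X \<in> G" unfolding G_def by auto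
  next
    fix X assume "X \<in> G"
    then obtain u where X: "X = {f\<in>\<Omega>. \<forall>i<d. f i \<le> u i}" unfolding G_def by auto
    have "X = {f\<in>(\<Pi>\<^sub>E i\<in>{..<d}. UNIV). \<forall>i\<in>{..<d}. f i \<in> (\<lambda>i. {..u i}) i}"
      unfolding X \<Omega>_def by auto
    moreover have "(\<lambda>i. {..u i}) \<in> Pi {..<d} (\<lambda>_. range atMost)" by auto
    ultimately show "X \<in> {{f\<in>{..<d} \<rightarrow>\<^sub>E (UNIV::real set). \<forall>i\<in>{..<d}. f i \<in> A i} | A. A \<in> {..<d} \<rightarrow> range atMost}"
      by (intro CollectI exI[of _ "\<lambda>i. {..u i}"] conjI) simp_all
  qed
  have GPow: "G \<subseteq> Pow \<Omega>" unfolding G_def by auto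
  have sets_eq: "sets (Pi\<^sub>M {..<d} (\<lambda>_. borel)) = sigma_sets \<Omega> G"
  proof -
    have "sets (Pi\<^sub>M {..<d} (\<lambda>_. borel::real measure)) = sets (Pi\<^sub>M {..<d} (\<lambda>_. sigma UNIV (range atMost)))"
      by (simp add: borel_eq_atMost[symmetric])
    also have "\<dots> = sets (sigma (\<Pi>\<^sub>E i\<in>{..<d}. UNIV) G)"
    proof (subst sets_PiM_sigma[of "{..<d}" "\<lambda>_. range atMost" "\<lambda>_. UNIV" "{{..<d}}"])
      show "\<And>i. i \<in> {..<d} \<Longrightarrow> \<exists>S\<subseteq>range atMost. countable S \<and> (UNIV::real set) = \<Union> S"
      proof (intro exI[of _ "range (\<lambda>n::nat. {..real n})"] conjI)
        show "(UNIV::real set) = \<Union> (range (\<lambda>n::nat. {..real n}))"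
          by (auto intro: real_arch_simple)
      qed auto
    qed (simp_all add: GP)
    also have "\<dots> = sigma_sets \<Omega> G" using GPow unfolding \<Omega>_def by simp
    finally show ?thesis .
  qed
  show ?thesis
  proof (rule measure_eqI_generator_eq[where E=G and \<Omega>=\<Omega> and A="\<lambda>n. {f\<in>\<Omega>. \<forall>i<d. f i \<le> real n}"])
    show "Int_stable G"
    proof (rule Int_stableI)
      fix X Y assume "X \<in> G" "Y \<in> G"
      then obtain u u' where X: "X = {f\<in>\<Omega>. \<forall>i<d. f i \<le> u i}" and Y: "Y = {f\<in>\<Omega>. \<forall>i<d. f i \<le> u' i}"
        unfolding G_def by auto
      have "X \<inter> Y = {f\<in>\<Omega>. \<forall>i<d. f i \<le> min (u i) (u' i)}" unfolding X Y by auto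
      then show "X \<inter> Y \<in> G" unfolding G_def by (intro rev_image_eqI[of "\<lambda>i. min (u i) (u' i)"]) auto
    qed
    show "G \<subseteq> Pow \<Omega>" by (rule GPow)
    show "sets \<mu>1 = sigma_sets \<Omega> G" using A.sets_mu sets_eq by simp
    show "sets \<mu>2 = sigma_sets \<Omega> G" using B.sets_mu sets_eq by simp
    fix X assume "X \<in> G"
    then obtain u where X: "X = {f\<in>\<Omega>. \<forall>i<d. f i \<le> u i}" unfolding G_def by auto
    have "X = {v\<in>space \<mu>1. \<forall>i<d. v i \<le> u i}" "X = {v\<in>space \<mu>2. \<forall>i<d. v i \<le> u i}"
      unfolding X \<Omega>_def A.space_mu B.space_mu by auto
    then show "emeasure \<mu>1 X = emeasure \<mu>2 X"
      using A.box_val[of u] B.box_val[of u] by (simp add: A.emeasure_eq_measure B.emeasure_eq_measure)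
  next
    show "range (\<lambda>n. {f\<in>\<Omega>. \<forall>i<d. f i \<le> real n}) \<subseteq> G" unfolding G_def by auto
    show "(\<Union>n. {f\<in>\<Omega>. \<forall>i<d. f i \<le> real n}) = \<Omega>"
    proof (intro equalityI subsetI)
      fix f assume f: "f \<in> \<Omega>"
      obtain n :: nat where n: "(\<Sum>i<d. \<bar>f i\<bar>) \<le> real n" using real_arch_simple by blast
      have "f i \<le> real n" if "i < d" for i
      proof -
        have "f i \<le> \<bar>f i\<bar>" by simp
        also have "\<dots> \<le> (\<Sum>i<d. \<bar>f i\<bar>)" using that by (intro member_le_sum) auto
        finally show ?thesis using n by simp
      qed
      then show "f \<in> (\<Union>n. {f\<in>\<Omega>. \<forall>i<d. f i \<le> real n})" using f by auto
    qed auto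
    show "\<And>n. emeasure \<mu>1 {f\<in>\<Omega>. \<forall>i<d. f i \<le> real n} \<noteq> \<infinity>" by (simp add: A.emeasure_eq_measure)
  qed
qed


lemma cdf_le1: "cont_df F \<Longrightarrow> F x \<le> 1"
proof -
  assume F: "cont_df F"
  then have "(F \<longlongrightarrow> 1) at_top" "mono F" unfolding cont_df_def by auto
  moreover have "eventually (\<lambda>y. F x \<le> F y) at_top"
    unfolding eventually_at_top_linorder using \<open>mono F\<close> by (intro exI[of _ x] allI impI) (erule monoD)
  ultimately show ?thesis by (intro tendsto_lowerbound[of F 1 at_top]) simp_all
qed

lemma cdf_ge0: "cont_df F \<Longrightarrow> 0 \<le> F x"
proof -
  assume F: "cont_df F"
  then have "(F \<longlongrightarrow> 0) at_bot" "mono F" unfolding cont_df_def by auto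
  moreover have "eventually (\<lambda>y. F y \<le> F x) at_bot"
    unfolding eventually_at_bot_linorder using \<open>mono F\<close> by (intro exI[of _ x] allI impI) (erule monoD)
  ultimately show ?thesis by (intro tendsto_upperbound[of F 0 at_bot]) simp_all
qed

lemma cdf_meas: "cont_df F \<Longrightarrow> F \<in> borel_measurable borel"
  unfolding cont_df_def by (auto intro: borel_measurable_continuous_onI)

lemma cdf_quantile:
  assumes F: "cont_df F" and t: "0 < t" "t < 1"
  shows "\<exists>x. F x = t \<and> (\<forall>z. F z \<le> t \<longleftrightarrow> z \<le> x)"
proof -
  have mono: "mono F" and cont: "continuous_on UNIV F" and l0: "(F \<longlongrightarrow> 0) at_bot" and l1: "(F \<longlongrightarrow> 1) at_top"
    using F unfolding cont_df_def by auto
  define S where "S = {z. F z \<le> t}"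
  have "eventually (\<lambda>z. F z < t) at_bot" using l0 t by (intro order_tendstoD(2)) auto
  then obtain z0 where z0: "F z0 < t" by (auto simp: eventually_at_bot_linorder)
  have "eventually (\<lambda>z. t < F z) at_top" using l1 t by (intro order_tendstoD(1)) auto
  then obtain N where N: "\<And>z. N \<le> z \<Longrightarrow> t < F z" by (auto simp: eventually_at_top_linorder)
  have bdd: "z < N" if "z \<in> S" for z
  proof (rule ccontr)
    assume "\<not> z < N"
    then have "t < F z" using N by simp
    then show False using that unfolding S_def by simp
  qed
  have "z0 \<in> S" using z0 unfolding S_def by simp
  then have ne: "S \<noteq> {}" by blast
  have bddS: "bdd_above S" unfolding bdd_above_def using bdd less_imp_le by blast
  have cl: "closed S" unfolding S_def by (intro closed_Collect_le cont continuous_on_const)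
  define x where "x = Sup S"
  have xS: "x \<in> S" unfolding x_def by (rule closed_contains_Sup[OF ne bddS cl])
  have up: "\<And>z. z \<in> S \<Longrightarrow> z \<le> x" unfolding x_def using bddS by (auto intro: cSup_upper)
  have iff: "\<forall>z. F z \<le> t \<longleftrightarrow> z \<le> x"
  proof (intro allI iffI)
    fix z assume "F z \<le> t" then show "z \<le> x" using up unfolding S_def by auto
  next
    fix z assume "z \<le> x" then have "F z \<le> F x" using mono by (auto dest: monoD)
    then show "F z \<le> t" using xS unfolding S_def by auto
  qed
  have "x < N" using bdd xS by auto
  have "F x \<le> t" using xS unfolding S_def by auto
  moreover have "t \<le> F N" using N[of N] by auto
  ultimately obtain y where y: "x \<le> y" "y \<le> N" "F y = t"
    using IVT'[of F x t N] \<open>x < N\<close> continuous_on_subset[OF cont] by auto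
  then have "y \<le> x" using up unfolding S_def by auto
  then have "F x = t" using y by auto
  then show ?thesis using iff by auto
qed

lemma sets_all_fin:
  "finite J \<Longrightarrow> (\<And>k. k \<in> J \<Longrightarrow> {x\<in>space M. P k x} \<in> sets M) \<Longrightarrow> {x\<in>space M. \<forall>k\<in>J. P k x} \<in> sets M"
proof -
  assume fin: "finite J" and h: "\<And>k. k \<in> J \<Longrightarrow> {x\<in>space M. P k x} \<in> sets M"
  have "{x\<in>space M. \<forall>k\<in>J. P k x} = space M \<inter> (\<Inter>k\<in>J. {x\<in>space M. P k x})" by auto
  also have "\<dots> \<in> sets M"
  proof (cases "J = {}")
    case True then show ?thesis by simp
  next
    case False then show ?thesis using h fin by (intro sets.Int sets.top sets.finite_INT) auto
  qed
  finally show ?thesis .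
qed

lemma sets_all_less:
  fixes d :: nat
  shows "(\<And>k. k < d \<Longrightarrow> {x\<in>space M. P k x} \<in> sets M) \<Longrightarrow> {x\<in>space M. \<forall>k<d. P k x} \<in> sets M"
  using sets_all_fin[of "{..<d}" M P] by (simp add: lessThan_def)


context cop
begin

lemma marg1: "i < d \<Longrightarrow> 0 \<le> t \<Longrightarrow> t \<le> 1 \<Longrightarrow>
  prob {v\<in>space \<mu>. \<forall>k<d. v k \<le> (if k = i then t else 1)} = t"
proof -
  assume i: "i < d" and t: "0 \<le> t" "t \<le> 1"
  have "prob {v\<in>space \<mu>. \<forall>k<d. v k \<le> (if k = i then t else 1)} = prob {v\<in>space \<mu>. v i \<le> t}"
  proof (rule measure_eq_AE)
    show "AE v in \<mu>. (v \<in> {v\<in>space \<mu>. \<forall>k<d. v k \<le> (if k = i then t else 1)}) = (v \<in> {v\<in>space \<mu>. v i \<le> t})"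
      using AE_01
    proof eventually_elim
      case (elim v)
      have "(\<forall>k<d. v k \<le> (if k = i then t else 1)) \<longleftrightarrow> v i \<le> t"
      proof
        assume "\<forall>k<d. v k \<le> (if k = i then t else 1)"
        then show "v i \<le> t" using i by (metis (full_types))
      next
        assume a: "v i \<le> t"
        show "\<forall>k<d. v k \<le> (if k = i then t else 1)"
        proof (intro allI impI)
          fix k assume "k < d"
          then show "v k \<le> (if k = i then t else 1)" using a elim by (simp add: less_imp_le)
        qed
      qed
      then show ?case by simp
    qed
    show "{v\<in>space \<mu>. \<forall>k<d. v k \<le> (if k = i then t else 1)} \<in> sets \<mu>" by (rule sets_all_lt) measurable
    show "{v\<in>space \<mu>. v i \<le> t} \<in> sets \<mu>" using i by measurable
  qed
  also have "\<dots> = t" using marg[OF i t] .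
  finally show ?thesis .
qed

end

locale trans = cop d \<mu> C for d \<mu> C +
  fixes F :: "nat \<Rightarrow> real \<Rightarrow> real" and M :: "'a measure" and X :: "nat \<Rightarrow> 'a \<Rightarrow> real"
  assumes Fdf: "\<forall>i<d. cont_df (F i)"
    and H: "has_joint_df d M X (\<lambda>x. C (\<lambda>i. F i (x i)))"
begin

lemma Mprob: "prob_space M" using H unfolding has_joint_df_def by auto

lemma Xm[measurable]: "i < d \<Longrightarrow> X i \<in> borel_measurable M" using H unfolding has_joint_df_def by auto

lemma Fm[measurable]: "i < d \<Longrightarrow> F i \<in> borel_measurable borel" using Fdf cdf_meas by auto

lemma Hx: "measure M {\<omega>\<in>space M. \<forall>i<d. X i \<omega> \<le> x i} = C (\<lambda>i. F i (x i))"
  using H unfolding has_joint_df_def by auto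

lemma F01: "i < d \<Longrightarrow> 0 \<le> F i z \<and> F i z \<le> 1" using Fdf cdf_le1 cdf_ge0 by auto

lemma Fcube: "(\<lambda>i. F i (x i)) \<in> unit_cube d" using F01 unfolding unit_cube_def by auto

lemma T2:
  assumes J: "J \<subseteq> {..<d}"
  shows "measure M {\<omega>\<in>space M. \<forall>i\<in>J. X i \<omega> \<le> x i} = prob {v\<in>space \<mu>. \<forall>i\<in>J. v i \<le> F i (x i)}"
proof -
  interpret P: prob_space M by (rule Mprob)
  have finJ: "finite J" using J finite_subset by blast
  define y where "y n i = (if i \<in> J then x i else real n)" for n :: nat and i
  define A where "A n = {\<omega>\<in>space M. \<forall>i<d. X i \<omega> \<le> y n i}" for n
  define B where "B n = {v\<in>space \<mu>. \<forall>i<d. v i \<le> F i (y n i)}" for n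
  have Asets: "A n \<in> sets M" for n unfolding A_def by (rule sets_all_less) measurable
  have Bsets: "B n \<in> sets \<mu>" for n unfolding B_def by (rule sets_all_lt) measurable
  have AB: "measure M (A n) = prob (B n)" for n
    unfolding A_def B_def Hx using C_eq[OF Fcube] by simp
  have incA: "incseq A"
  proof (rule incseq_SucI)
    fix n show "A n \<subseteq> A (Suc n)" unfolding A_def y_def by (auto intro: order_trans)
  qed
  have incB: "incseq B"
  proof (rule incseq_SucI)
    fix n
    have "F i (y n i) \<le> F i (y (Suc n) i)" if "i < d" for i
      using Fdf that unfolding cont_df_def y_def by (auto intro: monoD)
    then show "B n \<subseteq> B (Suc n)" unfolding B_def by (auto intro: order_trans)
  qed
  have UA: "(\<Union>n. A n) = {\<omega>\<in>space M. \<forall>i\<in>J. X i \<omega> \<le> x i}"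
  proof (intro equalityI subsetI)
    fix \<omega> assume "\<omega> \<in> (\<Union>n. A n)"
    then obtain n where "\<omega> \<in> A n" by auto
    then show "\<omega> \<in> {\<omega>\<in>space M. \<forall>i\<in>J. X i \<omega> \<le> x i}"
      using J unfolding A_def y_def by auto
  next
    fix \<omega> assume w: "\<omega> \<in> {\<omega>\<in>space M. \<forall>i\<in>J. X i \<omega> \<le> x i}"
    obtain n :: nat where n: "(\<Sum>i<d. \<bar>X i \<omega>\<bar>) \<le> real n" using real_arch_simple by blast
    have "X i \<omega> \<le> y n i" if "i < d" for i
    proof (cases "i \<in> J")
      case True then show ?thesis using w unfolding y_def by auto
    next
      case False
      have "X i \<omega> \<le> \<bar>X i \<omega>\<bar>" by simp
      also have "\<dots> \<le> (\<Sum>i<d. \<bar>X i \<omega>\<bar>)" using that by (intro member_le_sum) auto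
      finally show ?thesis using n False unfolding y_def by simp
    qed
    then show "\<omega> \<in> (\<Union>n. A n)" using w unfolding A_def by auto
  qed
  have UB: "prob (\<Union>n. B n) = prob {v\<in>space \<mu>. \<forall>i\<in>J. v i \<le> F i (x i)}"
  proof (rule measure_eq_AE)
    show "AE v in \<mu>. (v \<in> (\<Union>n. B n)) = (v \<in> {v\<in>space \<mu>. \<forall>i\<in>J. v i \<le> F i (x i)})"
      using AE_01
    proof eventually_elim
      case (elim v)
      show ?case
      proof
        assume "v \<in> (\<Union>n. B n)"
        then obtain n where "v \<in> B n" by auto
        then show "v \<in> {v\<in>space \<mu>. \<forall>i\<in>J. v i \<le> F i (x i)}"
          using J unfolding B_def y_def by auto
      next
        assume v: "v \<in> {v\<in>space \<mu>. \<forall>i\<in>J. v i \<le> F i (x i)}"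
        have "\<forall>k\<in>{..<d}. eventually (\<lambda>n. v k < F k (real n)) sequentially"
        proof
          fix k assume k: "k \<in> {..<d}"
          have "(F k \<longlongrightarrow> 1) at_top" using Fdf k unfolding cont_df_def by auto
          then have "((\<lambda>n. F k (real n)) \<longlongrightarrow> 1) sequentially"
            by (rule filterlim_compose[OF _ filterlim_real_sequentially])
          moreover have "v k < 1" using elim k by auto
          ultimately show "eventually (\<lambda>n. v k < F k (real n)) sequentially"
            by (rule order_tendstoD(1))
        qed
        then have "eventually (\<lambda>n. \<forall>k\<in>{..<d}. v k < F k (real n)) sequentially"
          by (rule eventually_ball_finite[rotated]) simp
        then obtain n where n: "\<forall>k\<in>{..<d}. v k < F k (real n)"
          by (auto simp: eventually_sequentially)
        have "v k \<le> F k (y n k)" if "k < d" for k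
        proof (cases "k \<in> J")
          case True then show ?thesis using v unfolding y_def by auto
        next
          case False then show ?thesis using n that unfolding y_def by (auto intro: less_imp_le)
        qed
        then have "v \<in> B n" using v unfolding B_def by auto
        then show "v \<in> (\<Union>n. B n)" by auto
      qed
    qed
    show "(\<Union>n. B n) \<in> sets \<mu>" using Bsets by auto
    show "{v\<in>space \<mu>. \<forall>i\<in>J. v i \<le> F i (x i)} \<in> sets \<mu>"
      using finJ J by (intro sets_all_fin) (auto, measurable)
  qed
  have "(\<lambda>n. measure M (A n)) \<longlonglongrightarrow> measure M (\<Union>n. A n)"
    using Asets incA by (intro Lim_measure_incseq) (auto simp: P.emeasure_eq_measure)
  moreover have "(\<lambda>n. measure M (A n)) \<longlonglongrightarrow> prob (\<Union>n. B n)"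
    unfolding AB using Bsets incB by (intro Lim_measure_incseq) (auto simp: emeasure_eq_measure)
  ultimately have "measure M (\<Union>n. A n) = prob (\<Union>n. B n)" by (rule LIMSEQ_unique)
  then show ?thesis using UA UB by simp
qed


lemma T3:
  assumes u: "u \<in> unit_cube d" "\<forall>i<d. 0 < u i"
  shows "measure M {\<omega>\<in>space M. \<forall>i<d. F i (X i \<omega>) \<le> u i} = prob {v\<in>space \<mu>. \<forall>i<d. v i \<le> u i}"
proof -
  define J where "J = {i. i < d \<and> u i < 1}"
  have J: "J \<subseteq> {..<d}" unfolding J_def by auto
  have finJ: "finite J" using J finite_subset by blast
  have "\<forall>i\<in>J. \<exists>x. F i x = u i \<and> (\<forall>z. F i z \<le> u i \<longleftrightarrow> z \<le> x)"
  proof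
    fix i assume "i \<in> J"
    then have "i < d" "u i < 1" unfolding J_def by auto
    then show "\<exists>x. F i x = u i \<and> (\<forall>z. F i z \<le> u i \<longleftrightarrow> z \<le> x)"
      using cdf_quantile[of "F i" "u i"] Fdf u(2) by auto
  qed
  then obtain x where x: "\<And>i. i \<in> J \<Longrightarrow> F i (x i) = u i \<and> (\<forall>z. F i z \<le> u i \<longleftrightarrow> z \<le> x i)"
    by metis
  have u1: "u i = 1" if "i < d" "i \<notin> J" for i
    using u(1) that unfolding J_def unit_cube_def by force
  have "{\<omega>\<in>space M. \<forall>i<d. F i (X i \<omega>) \<le> u i} = {\<omega>\<in>space M. \<forall>i\<in>J. X i \<omega> \<le> x i}"
  proof (intro equalityI subsetI)
    fix \<omega> assume "\<omega> \<in> {\<omega>\<in>space M. \<forall>i<d. F i (X i \<omega>) \<le> u i}"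
    then show "\<omega> \<in> {\<omega>\<in>space M. \<forall>i\<in>J. X i \<omega> \<le> x i}" using x J by blast
  next
    fix \<omega> assume w: "\<omega> \<in> {\<omega>\<in>space M. \<forall>i\<in>J. X i \<omega> \<le> x i}"
    have "F i (X i \<omega>) \<le> u i" if "i < d" for i
    proof (cases "i \<in> J")
      case True then show ?thesis using w x by blast
    next
      case False then show ?thesis using u1[OF that False] F01[OF that] by simp
    qed
    then show "\<omega> \<in> {\<omega>\<in>space M. \<forall>i<d. F i (X i \<omega>) \<le> u i}" using w by auto
  qed
  also have "measure M \<dots> = prob {v\<in>space \<mu>. \<forall>i\<in>J. v i \<le> F i (x i)}" by (rule T2[OF J])
  also have "{v\<in>space \<mu>. \<forall>i\<in>J. v i \<le> F i (x i)} = {v\<in>space \<mu>. \<forall>i\<in>J. v i \<le> u i}"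
    using x by auto
  also have "prob \<dots> = prob {v\<in>space \<mu>. \<forall>i<d. v i \<le> u i}"
  proof (rule measure_eq_AE)
    show "AE v in \<mu>. (v \<in> {v\<in>space \<mu>. \<forall>i\<in>J. v i \<le> u i}) = (v \<in> {v\<in>space \<mu>. \<forall>i<d. v i \<le> u i})"
      using AE_01
    proof eventually_elim
      case (elim v)
      have "(\<forall>i\<in>J. v i \<le> u i) \<longleftrightarrow> (\<forall>i<d. v i \<le> u i)"
      proof
        assume a: "\<forall>i\<in>J. v i \<le> u i"
        show "\<forall>i<d. v i \<le> u i"
        proof (intro allI impI)
          fix i assume i: "i < d"
          show "v i \<le> u i"
          proof (cases "i \<in> J")
            case True then show ?thesis using a by blast
          next
            case False then show ?thesis using u1[OF i False] elim i by (simp add: less_imp_le)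
          qed
        qed
      next
        assume "\<forall>i<d. v i \<le> u i" then show "\<forall>i\<in>J. v i \<le> u i" using J by blast
      qed
      then show ?case by simp
    qed
    show "{v\<in>space \<mu>. \<forall>i\<in>J. v i \<le> u i} \<in> sets \<mu>"
      using finJ J by (intro sets_all_fin) (auto, measurable)
    show "{v\<in>space \<mu>. \<forall>i<d. v i \<le> u i} \<in> sets \<mu>" by (rule sets_all_lt) measurable
  qed
  finally show ?thesis .
qed

lemma T4:
  assumes u: "u \<in> unit_cube d"
  shows "measure M {\<omega>\<in>space M. \<forall>i<d. F i (X i \<omega>) \<le> u i} = prob {v\<in>space \<mu>. \<forall>i<d. v i \<le> u i}"
proof (cases "\<forall>i<d. 0 < u i")
  case True then show ?thesis using T3 u by blast
next
  case False
  interpret P: prob_space M by (rule Mprob)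
  from False obtain k where k: "k < d" "\<not> 0 < u k" by auto
  then have uk: "u k = 0" using u unfolding unit_cube_def by force
  have Sm: "{\<omega>\<in>space M. \<forall>i<d. F i (X i \<omega>) \<le> u i} \<in> sets M" by (rule sets_all_less) measurable
  have "prob {v\<in>space \<mu>. \<forall>i<d. v i \<le> u i} \<le> prob {v\<in>space \<mu>. v k \<le> 0}"
  proof (rule finite_measure_mono)
    show "{v\<in>space \<mu>. \<forall>i<d. v i \<le> u i} \<subseteq> {v\<in>space \<mu>. v k \<le> 0}" using k uk by auto
    show "{v\<in>space \<mu>. v k \<le> 0} \<in> sets \<mu>" using k by measurable
  qed
  also have "\<dots> = 0" using marg[OF k(1), of 0] by simp
  finally have R: "prob {v\<in>space \<mu>. \<forall>i<d. v i \<le> u i} = 0" using measure_nonneg[of \<mu>] by (simp add: order_antisym)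
  define L where "L = measure M {\<omega>\<in>space M. \<forall>i<d. F i (X i \<omega>) \<le> u i}"
  have le: "L \<le> t" if t: "0 < t" "t < 1" for t
  proof -
    define u' where "u' i = (if i = k then t else 1)" for i
    have u'c: "u' \<in> unit_cube d" "\<forall>i<d. 0 < u' i" using t unfolding u'_def unit_cube_def by auto
    have "L \<le> measure M {\<omega>\<in>space M. \<forall>i<d. F i (X i \<omega>) \<le> u' i}"
      unfolding L_def
    proof (rule P.finite_measure_mono)
      show "{\<omega>\<in>space M. \<forall>i<d. F i (X i \<omega>) \<le> u i} \<subseteq> {\<omega>\<in>space M. \<forall>i<d. F i (X i \<omega>) \<le> u' i}"
      proof safe
        fix \<omega> i assume a: "\<omega> \<in> space M" "\<forall>i<d. F i (X i \<omega>) \<le> u i" "i < d"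
        show "F i (X i \<omega>) \<le> u' i"
        proof (cases "i = k")
          case True then show ?thesis using a t uk unfolding u'_def by force
        next
          case False then show ?thesis using F01[OF a(3)] unfolding u'_def by simp
        qed
      qed
      show "{\<omega>\<in>space M. \<forall>i<d. F i (X i \<omega>) \<le> u' i} \<in> sets M" by (rule sets_all_less) measurable
    qed
    also have "\<dots> = prob {v\<in>space \<mu>. \<forall>i<d. v i \<le> u' i}" by (rule T3[OF u'c])
    also have "\<dots> = t" using marg1[OF k(1), of t] t unfolding u'_def by simp
    finally show ?thesis .
  qed
  have "L \<le> 0"
  proof (rule ccontr)
    assume "\<not> L \<le> 0"
    then have "0 < min (L/2) (1/2)" "min (L/2) (1/2) < 1" by auto
    from le[OF this] show False using \<open>\<not> L \<le> 0\<close> by linarith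
  qed
  then have "L = 0" unfolding L_def using measure_nonneg[of M] by (meson order_antisym)
  then show ?thesis using R unfolding L_def by simp
qed

definition U :: "'a \<Rightarrow> nat \<Rightarrow> real" where
  "U \<omega> = (\<lambda>i\<in>{..<d}. F i (X i \<omega>))"

lemma U_meas[measurable]: "U \<in> measurable M (Pi\<^sub>M {..<d} (\<lambda>_. borel))"
  unfolding U_def by (intro measurable_restrict) measurable

lemma law: "distr M (Pi\<^sub>M {..<d} (\<lambda>_. borel)) U = \<mu>"
proof (rule cop_unique[OF _ cm])
  interpret P: prob_space M by (rule Mprob)
  let ?N = "distr M (Pi\<^sub>M {..<d} (\<lambda>_. borel)) U"
  have sp: "space ?N = space \<mu>" using space_mu by (simp add: space_PiM)
  have pre: "U -` {v\<in>space ?N. \<forall>i<d. v i \<le> u i} \<inter> space M = {\<omega>\<in>space M. \<forall>i<d. F i (X i \<omega>) \<le> u i}" for u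
    using measurable_space[OF U_meas] by (auto simp: U_def)
  have box: "measure ?N {v\<in>space ?N. \<forall>i<d. v i \<le> u i} = prob {v\<in>space \<mu>. \<forall>i<d. v i \<le> u i}"
    if "u \<in> unit_cube d" for u
  proof -
    have "{v\<in>space ?N. \<forall>i<d. v i \<le> u i} \<in> sets (Pi\<^sub>M {..<d} (\<lambda>_. borel))"
      using sets_all_less[of d "Pi\<^sub>M {..<d} (\<lambda>_. borel)" "\<lambda>i v. v i \<le> u i"] by simp
    then have "measure ?N {v\<in>space ?N. \<forall>i<d. v i \<le> u i} = measure M (U -` {v\<in>space ?N. \<forall>i<d. v i \<le> u i} \<inter> space M)"
      by (rule measure_distr[OF U_meas])
    also have "\<dots> = measure M {\<omega>\<in>space M. \<forall>i<d. F i (X i \<omega>) \<le> u i}" by (simp only: pre)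
    finally show ?thesis using T4[OF that] by simp
  qed
  show "copula_measure d ?N C"
    unfolding copula_measure_def
  proof (intro conjI ballI allI impI)
    show "prob_space ?N" by (intro P.prob_space_distr U_meas)
    show "sets ?N = sets (Pi\<^sub>M {..<d} (\<lambda>_. borel))" by simp
  next
    fix u assume u: "u \<in> unit_cube d"
    show "C u = measure ?N {v\<in>space ?N. \<forall>i<d. v i \<le> u i}" using box[OF u] C_eq[OF u] by simp
  next
    fix i t assume i: "i < d" and t: "t \<in> {0..1::real}"
    define u' where "u' k = (if k = i then t else 1)" for k
    have uc: "u' \<in> unit_cube d" using t unfolding u'_def unit_cube_def by auto
    have Ssets: "{v\<in>space ?N. v i \<le> t} \<in> sets (Pi\<^sub>M {..<d} (\<lambda>_. borel))"
    proof -
      have "(\<lambda>v. v i) \<in> borel_measurable (Pi\<^sub>M {..<d} (\<lambda>_. borel::real measure))"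
        using i by (intro measurable_component_singleton) auto
      then show ?thesis by (simp add: space_PiM) (measurable)
    qed
    have "measure ?N {v\<in>space ?N. v i \<le> t} = measure M (U -` {v\<in>space ?N. v i \<le> t} \<inter> space M)"
      by (rule measure_distr[OF U_meas Ssets])
    also have "U -` {v\<in>space ?N. v i \<le> t} \<inter> space M = {\<omega>\<in>space M. F i (X i \<omega>) \<le> t}"
      using measurable_space[OF U_meas] i by (auto simp: U_def)
    also have "\<dots> = {\<omega>\<in>space M. \<forall>k<d. F k (X k \<omega>) \<le> u' k}"
      using F01 i unfolding u'_def by auto
    also have "measure M \<dots> = prob {v\<in>space \<mu>. \<forall>k<d. v k \<le> u' k}" by (rule T4[OF uc])
    also have "\<dots> = t" using marg1[OF i, of t] t unfolding u'_def by simp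
    finally show "measure ?N {v\<in>space ?N. v i \<le> t} = t" .
  qed
qed


lemma int_tr: fixes f :: "(nat \<Rightarrow> real) \<Rightarrow> real" shows "f \<in> borel_measurable (Pi\<^sub>M {..<d} (\<lambda>_. borel)) \<Longrightarrow> (\<integral>\<omega>. f (U \<omega>) \<partial>M) = (\<integral>v. f v \<partial>\<mu>)"
  using integral_distr[OF U_meas, of f] law by simp

lemma coordPM[measurable]: "i < d \<Longrightarrow> (\<lambda>v. v i) \<in> borel_measurable (Pi\<^sub>M {..<d} (\<lambda>_. borel::real measure))"
  by (intro measurable_component_singleton) auto

lemma cov_tr: "i < d \<Longrightarrow> j < d \<Longrightarrow> covariance M (\<lambda>\<omega>. F i (X i \<omega>)) (\<lambda>\<omega>. F j (X j \<omega>)) = cv i j"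
proof -
  assume ij: "i < d" "j < d"
  have Ui: "\<And>\<omega> k. k < d \<Longrightarrow> U \<omega> k = F k (X k \<omega>)" unfolding U_def by simp
  have m: "(\<integral>\<omega>. F k (X k \<omega>) \<partial>M) = 1/2" if k: "k < d" for k
  proof -
    have "(\<integral>\<omega>. F k (X k \<omega>) \<partial>M) = (\<integral>\<omega>. (\<lambda>v. v k) (U \<omega>) \<partial>M)" using Ui[OF k] by simp
    also have "\<dots> = (\<integral>v. v k \<partial>\<mu>)" using k by (intro int_tr) measurable
    also have "\<dots> = 1/2" using mean[OF k] .
    finally show ?thesis .
  qed
  have "covariance M (\<lambda>\<omega>. F i (X i \<omega>)) (\<lambda>\<omega>. F j (X j \<omega>)) =
      (\<integral>\<omega>. (\<lambda>v. (v i - 1/2) * (v j - 1/2)) (U \<omega>) \<partial>M)"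
    unfolding covariance_def m[OF ij(1)] m[OF ij(2)] using Ui ij by simp
  also have "\<dots> = cv i j" unfolding cv_def using ij by (intro int_tr) measurable
  finally show ?thesis .
qed

lemma rho_tr: "i < d \<Longrightarrow> j < d \<Longrightarrow> spearman_rho M F X i j = 12 * cv i j"
  unfolding spearman_rho_def using cov_tr by simp

end


lemma pairs_Suc: "pairs_lt (Suc n) = pairs_lt n \<union> (\<lambda>i. (i, n)) ` {..<n}"
  unfolding pairs_lt_def by auto

lemma pairs_finite: "finite (pairs_lt n)"
proof -
  have "pairs_lt n \<subseteq> {..<n} \<times> {..<n}" unfolding pairs_lt_def by auto
  then show ?thesis by (rule finite_subset) auto
qed

lemma sum_pairs_Suc:
  fixes f :: "nat \<Rightarrow> nat \<Rightarrow> real"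
  shows "(\<Sum>(i, j)\<in>pairs_lt (Suc n). f i j) = (\<Sum>(i, j)\<in>pairs_lt n. f i j) + (\<Sum>i<n. f i n)"
proof -
  have disj: "pairs_lt n \<inter> (\<lambda>i. (i, n)) ` {..<n} = {}" unfolding pairs_lt_def by auto
  have "(\<Sum>(i, j)\<in>pairs_lt (Suc n). f i j) = (\<Sum>(i, j)\<in>pairs_lt n. f i j) + (\<Sum>(i, j)\<in>(\<lambda>i. (i, n)) ` {..<n}. f i j)"
    unfolding pairs_Suc by (rule sum.union_disjoint) (use pairs_finite disj in auto)
  also have "(\<Sum>(i, j)\<in>(\<lambda>i. (i, n)) ` {..<n}. f i j) = (\<Sum>i<n. f i n)"
    by (subst sum.reindex) (auto simp: inj_on_def)
  finally show ?thesis .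
qed

lemma double_sum_sym:
  fixes f :: "nat \<Rightarrow> nat \<Rightarrow> real"
  assumes sym: "\<And>i j. f i j = f j i"
  shows "(\<Sum>i<n. \<Sum>j<n. f i j) = (\<Sum>i<n. f i i) + 2 * (\<Sum>(i, j)\<in>pairs_lt n. f i j)"
proof (induction n)
  case 0
  then show ?case by (simp add: pairs_lt_def)
next
  case (Suc n)
  have "(\<Sum>i<Suc n. \<Sum>j<Suc n. f i j) = (\<Sum>i<n. \<Sum>j<n. f i j) + (\<Sum>i<n. f i n) + (\<Sum>j<n. f n j) + f n n"
    by (simp add: sum.distrib)
  also have "(\<Sum>j<n. f n j) = (\<Sum>i<n. f i n)" using sym by simp
  finally show ?case using Suc by (simp add: sum_pairs_Suc)
qed

context cop
begin

lemma lower_key: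
  fixes w :: "nat \<Rightarrow> real"
  assumes d2: "2 \<le> d" and wpos: "\<forall>i<d. 0 < w i"
  shows "lfun d w \<le> Q w \<and> (Q w = lfun d w \<longleftrightarrow> Q (wstar d w) = 0)"
proof -
  define S1 where "S1 = (\<Sum>i<d. w i)"
  have "0 \<in> {..<d}" using d2 by simp
  then have fin: "finite (w ` {..<d})" "w ` {..<d} \<noteq> {}" by auto
  obtain m where m: "m < d" "w m = Max (w ` {..<d})" using Max_in[OF fin] by auto
  have wle: "w i \<le> w m" if "i < d" for i using m(2) fin that by simp
  define \<delta> where "\<delta> = max (2 * w m - S1) 0"
  have l_eq: "lfun d w = \<delta>\<^sup>2 / 12" unfolding lfun_def \<delta>_def S1_def m(2)[symmetric] by simp
  define ws where "ws = wstar d w"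
  have pair_le: "w i + w m \<le> S1" if "i < d" "i \<noteq> m" for i
  proof -
    have "(\<Sum>k\<in>{i, m}. w k) \<le> (\<Sum>k<d. w k)"
      using that m wpos by (intro sum_mono2) (auto intro: less_imp_le)
    then show ?thesis using that unfolding S1_def by simp
  qed
  have dec: "w i = ws i + (if i = m then \<delta> else 0)" if i: "i < d" for i
  proof (cases "2 * w m \<le> S1")
    case True
    then have "\<delta> = 0" unfolding \<delta>_def by simp
    moreover have "2 * w i \<le> S1" using wle[OF i] True by simp
    ultimately show ?thesis unfolding ws_def wstar_def S1_def by simp
  next
    case False
    then have dl: "\<delta> = 2 * w m - S1" unfolding \<delta>_def by simp
    show ?thesis
    proof (cases "i = m")
      case True then show ?thesis using False dl unfolding ws_def wstar_def S1_def by simp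
    next
      case ne: False
      have "2 * w i \<le> S1" using pair_le[OF i ne] wle[OF i] False by simp
      then show ?thesis using ne unfolding ws_def wstar_def S1_def by simp
    qed
  qed
  have Zdec: "Z w v = Z ws v + \<delta> * (v m - 1/2)" for v
  proof -
    have "Z w v = (\<Sum>i<d. ws i * (v i - 1/2) + (if i = m then \<delta> * (v m - 1/2) else 0))"
      unfolding Z_def by (intro sum.cong refl) (simp add: dec distrib_right)
    also have "\<dots> = Z ws v + \<delta> * (v m - 1/2)"
      unfolding Z_def sum.distrib using m(1) by simp
    finally show ?thesis .
  qed
  define B where "B = (\<Sum>i<d. ws i * cv i m)"
  have QE: "Q w = Q ws + 2 * \<delta> * B + \<delta>\<^sup>2 / 12"
  proof -
    have "Q w = (\<integral>v. (Z ws v)\<^sup>2 + (2 * \<delta>) * (Z ws v * (v m - 1/2)) + \<delta>\<^sup>2 * ((v m - 1/2) * (v m - 1/2)) \<partial>\<mu>)"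
      unfolding Q_def Zdec by (intro Bochner_Integration.integral_cong refl) (simp add: power2_eq_square algebra_simps)
    also have "\<dots> = Q ws + (2 * \<delta>) * (\<integral>v. Z ws v * (v m - 1/2) \<partial>\<mu>) + \<delta>\<^sup>2 * cv m m"
      unfolding Q_def cv_def using m(1) int_Z2 int_ZY int_prod
      by (simp add: integrable_add integrable_mult_right)
    also have "\<dots> = Q ws + 2 * \<delta> * B + \<delta>\<^sup>2 / 12"
      unfolding B_def using ZY[OF m(1)] cv_diag[OF m(1)] by simp
    finally show ?thesis .
  qed
  have dB: "0 \<le> \<delta> * B"
  proof (cases "2 * w m \<le> S1")
    case True then show ?thesis unfolding \<delta>_def by simp
  next
    case False
    then have dpos: "0 \<le> \<delta>" unfolding \<delta>_def by simp
    have wsm: "ws m = S1 - w m" using False unfolding ws_def wstar_def S1_def by simp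
    have wsi: "ws i = w i" if "i < d" "i \<noteq> m" for i using dec[OF that(1)] that by simp
    have S1m: "S1 - w m = (\<Sum>i\<in>{..<d} - {m}. w i)"
      unfolding S1_def using m(1) by (simp add: sum_diff1)
    have "B = ws m * cv m m + (\<Sum>i\<in>{..<d} - {m}. ws i * cv i m)"
      unfolding B_def using m(1) by (simp add: sum.remove)
    also have "\<dots> = (\<Sum>i\<in>{..<d} - {m}. w i * (1/12)) + (\<Sum>i\<in>{..<d} - {m}. w i * cv i m)"
    proof -
      have "ws m * cv m m = (\<Sum>i\<in>{..<d} - {m}. w i * (1/12))"
        unfolding wsm S1m cv_diag[OF m(1)] by (simp add: sum_distrib_right)
      moreover have "(\<Sum>i\<in>{..<d} - {m}. ws i * cv i m) = (\<Sum>i\<in>{..<d} - {m}. w i * cv i m)"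
        using wsi by (intro sum.cong refl) auto
      ultimately show ?thesis by simp
    qed
    also have "\<dots> = (\<Sum>i\<in>{..<d} - {m}. w i * (1/12 + cv i m))"
      by (simp add: distrib_left sum.distrib)
    also have "\<dots> \<ge> 0"
    proof (rule sum_nonneg)
      fix i assume "i \<in> {..<d} - {m}"
      then have "i < d" by auto
      then show "0 \<le> w i * (1/12 + cv i m)" using wpos cv_ge[OF _ m(1), of i] by (intro mult_nonneg_nonneg) auto
    qed
    finally show ?thesis using dpos by simp
  qed
  have "lfun d w \<le> Q w" using QE l_eq dB Q_nonneg[of ws] by simp
  moreover have "Q w = lfun d w \<longleftrightarrow> Q ws = 0"
  proof
    assume "Q w = lfun d w"
    then have "Q ws + 2 * (\<delta> * B) = 0" using QE l_eq by simp
    then show "Q ws = 0" using dB Q_nonneg[of ws] by linarith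
  next
    assume q: "Q ws = 0"
    then have "B = 0" unfolding B_def using Q_zero_ZY[OF q m(1)] by simp
    then show "Q w = lfun d w" using QE l_eq q by simp
  qed
  ultimately show ?thesis unfolding ws_def by simp
qed

end


lemma cv_mono:
  assumes c1: "copula_measure d (copula_distr d C1) C1" and c2: "copula_measure d (copula_distr d C2) C2"
    and prec: "copula_prec d C1 C2" and ij: "i < d" "j < d" "i \<noteq> j"
  shows "cop.cv (copula_distr d C1) i j \<le> cop.cv (copula_distr d C2) i j"
proof -
  interpret A: cop d "copula_distr d C1" C1 by (rule cop.intro[OF c1])
  interpret B: cop d "copula_distr d C2" C2 by (rule cop.intro[OF c2])
  have key: "indicator ({0..1::real}\<times>{0..1::real}) p * ennreal (A.prob {v\<in>space (copula_distr d C1). fst p < v i \<and> snd p < v j})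
      \<le> indicator ({0..1::real}\<times>{0..1::real}) p * ennreal (B.prob {v\<in>space (copula_distr d C2). fst p < v i \<and> snd p < v j})" for p
  proof (cases "p \<in> {0..1::real}\<times>{0..1::real}")
    case False then show ?thesis by simp
  next
    case True
    define u where "u k = (if k = i then fst p else if k = j then snd p else 0)" for k
    have uc: "u \<in> unit_cube d" using True unfolding u_def unit_cube_def by auto
    have u: "u i = fst p" "u j = snd p" "\<forall>k<d. k \<noteq> i \<and> k \<noteq> j \<longrightarrow> u k = 0" using ij unfolding u_def by auto
    have "A.prob {v\<in>space (copula_distr d C1). fst p < v i \<and> snd p < v j} = copula_surv d C1 u"
      unfolding copula_surv_def using True by (intro A.surv_pair[OF ij _ _ u]) auto
    also have "\<dots> \<le> copula_surv d C2 u" using prec uc unfolding copula_prec_def by auto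
    also have "\<dots> = B.prob {v\<in>space (copula_distr d C2). fst p < v i \<and> snd p < v j}"
      unfolding copula_surv_def using True by (intro B.surv_pair[OF ij _ _ u, symmetric]) auto
    finally show ?thesis using True by simp
  qed
  have "ennreal (\<integral>v. v i * v j \<partial>copula_distr d C1) \<le> ennreal (\<integral>v. v i * v j \<partial>copula_distr d C2)"
    unfolding A.E_prod[OF ij(1,2)] B.E_prod[OF ij(1,2)] by (intro nn_integral_mono key)
  moreover have "0 \<le> (\<integral>v. v i * v j \<partial>copula_distr d C2)"
  proof (rule integral_nonneg_AE)
    show "AE x in copula_distr d C2. 0 \<le> x i * x j" using B.AE_01
    proof eventually_elim
      case (elim x)
      then have "0 < x i" "0 < x j" using ij by auto
      then show ?case by simp
    qed
  qed
  ultimately have "(\<integral>v. v i * v j \<partial>copula_distr d C1) \<le> (\<integral>v. v i * v j \<partial>copula_distr d C2)"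
    by (simp add: ennreal_le_iff)
  then show ?thesis using A.cv_alt[OF ij(1,2)] B.cv_alt[OF ij(1,2)] by simp
qed

context trans
begin

lemma SIX_eq: "SIX d w M F X = 12 * (\<Sum>(i, j)\<in>pairs_lt d. w i * w j * cv i j) / (\<Sum>(i, j)\<in>pairs_lt d. w i * w j)"
proof -
  have "(\<Sum>(i, j)\<in>pairs_lt d. w i * w j * spearman_rho M F X i j) = (\<Sum>(i, j)\<in>pairs_lt d. 12 * (w i * w j * cv i j))"
    by (intro sum.cong refl) (auto simp: pairs_lt_def rho_tr)
  also have "\<dots> = 12 * (\<Sum>(i, j)\<in>pairs_lt d. w i * w j * cv i j)"
    by (simp add: sum_distrib_left case_prod_unfold)
  finally show ?thesis unfolding SIX_def by simp
qed

end


theorem mainTheorem12: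
  fixes d :: nat and w :: "nat \<Rightarrow> real" and F :: "nat \<Rightarrow> real \<Rightarrow> real"
    and C Cs :: "(nat \<Rightarrow> real) \<Rightarrow> real"
    and M :: "'a measure" and X :: "nat \<Rightarrow> 'a \<Rightarrow> real"
    and Ms :: "'b measure" and Xs :: "nat \<Rightarrow> 'b \<Rightarrow> real"
  assumes "d \<ge> 2"
    and "\<forall>i<d. w i > 0"
    and "\<forall>i<d. cont_df (F i)"
    and "is_copula d C" and "is_copula d Cs"
    and "has_joint_df d M X (\<lambda>x. C (\<lambda>i. F i (x i)))"
    and "has_joint_df d Ms Xs (\<lambda>x. Cs (\<lambda>i. F i (x i)))"
  defines "S1 \<equiv> (\<Sum>i<d. w i)" and "S2 \<equiv> (\<Sum>i<d. (w i)\<^sup>2)"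
  shows "(copula_prec d C Cs \<longrightarrow> SIX d w M F X \<le> SIX d w Ms F Xs)
    \<and> ((12 * lfun d w - S2) / (S1\<^sup>2 - S2) \<le> SIX d w M F X \<and> SIX d w M F X \<le> 1)
    \<and> (SIX d w M F X = 1 \<longleftrightarrow> comonotonic_copula d C)
    \<and> (SIX d w M F X = (12 * lfun d w - S2) / (S1\<^sup>2 - S2) \<longleftrightarrow> is_CM d (wstar d w) C)"
proof -
  note d2 = assms(1) and wpos = assms(2)
  have cm1: "copula_measure d (copula_distr d C) C"
    using assms(4) unfolding is_copula_def copula_distr_def by (rule someI_ex)
  have cm2: "copula_measure d (copula_distr d Cs) Cs"
    using assms(5) unfolding is_copula_def copula_distr_def by (rule someI_ex)
  interpret A: trans d "copula_distr d C" C F M X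
    unfolding trans_def trans_axioms_def cop_def using cm1 assms(3,6) by auto
  interpret B: trans d "copula_distr d Cs" Cs F Ms Xs
    unfolding trans_def trans_axioms_def cop_def using cm2 assms(3,7) by auto
  define P where "P = (\<Sum>(i, j)\<in>pairs_lt d. w i * w j)"
  define Sa where "Sa = (\<Sum>(i, j)\<in>pairs_lt d. w i * w j * A.cv i j)"
  define Sb where "Sb = (\<Sum>(i, j)\<in>pairs_lt d. w i * w j * B.cv i j)"
  have SIXa: "SIX d w M F X = 12 * Sa / P" unfolding Sa_def P_def by (rule A.SIX_eq)
  have SIXb: "SIX d w Ms F Xs = 12 * Sb / P" unfolding Sb_def P_def by (rule B.SIX_eq)
  have pairs_iff: "(i, j) \<in> pairs_lt d \<longleftrightarrow> i < j \<and> j < d" for i j unfolding pairs_lt_def by simp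
  have p01: "(0, 1) \<in> pairs_lt d" using d2 unfolding pairs_lt_def by auto
  have Ppos: "0 < P"
    unfolding P_def
  proof (rule sum_pos2[OF pairs_finite p01])
    show "0 < (case (0, 1) of (i, j) \<Rightarrow> w i * w j)" using wpos d2 by simp
    show "\<And>x. x \<in> pairs_lt d \<Longrightarrow> 0 \<le> (case x of (i, j) \<Rightarrow> w i * w j)"
      using wpos by (auto simp: pairs_lt_def less_imp_le)
  qed
  have S12: "S1\<^sup>2 - S2 = 2 * P"
  proof -
    have "S1\<^sup>2 = (\<Sum>i<d. \<Sum>j<d. w i * w j)" unfolding S1_def power2_eq_square sum_product ..
    also have "\<dots> = (\<Sum>i<d. w i * w i) + 2 * P" unfolding P_def by (rule double_sum_sym) simp
    finally show ?thesis unfolding S2_def by (simp add: power2_eq_square)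
  qed
  have QA: "A.Q w = S2 / 12 + 2 * Sa"
  proof -
    have "A.Q w = (\<Sum>i<d. w i * w i * A.cv i i) + 2 * Sa"
      unfolding A.Q_expand Sa_def by (rule double_sum_sym) (simp add: A.cv_sym)
    also have "(\<Sum>i<d. w i * w i * A.cv i i) = S2 / 12"
      unfolding S2_def by (simp add: A.cv_diag power2_eq_square sum_divide_distrib)
    finally show ?thesis .
  qed
  define L where "L = (12 * lfun d w - S2) / (S1\<^sup>2 - S2)"
  have SIX_Q: "SIX d w M F X = (12 * A.Q w - S2) / (S1\<^sup>2 - S2)"
    unfolding SIXa S12 QA using Ppos by (simp add: field_simps)
  have key: "lfun d w \<le> A.Q w \<and> (A.Q w = lfun d w \<longleftrightarrow> A.Q (wstar d w) = 0)"
    by (rule A.lower_key[OF d2 wpos])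
  have den: "0 < S1\<^sup>2 - S2" using S12 Ppos by simp
  have part1: "copula_prec d C Cs \<longrightarrow> SIX d w M F X \<le> SIX d w Ms F Xs"
  proof
    assume prec: "copula_prec d C Cs"
    have "Sa \<le> Sb"
      unfolding Sa_def Sb_def
    proof (rule sum_mono)
      fix x assume "x \<in> pairs_lt d"
      then obtain i j where x: "x = (i, j)" "i < j" "j < d" unfolding pairs_lt_def by auto
      have "A.cv i j \<le> B.cv i j" using cv_mono[OF cm1 cm2 prec, of i j] x by simp
      moreover have "0 \<le> w i * w j" using wpos x by (simp add: less_imp_le)
      ultimately show "(case x of (i, j) \<Rightarrow> w i * w j * A.cv i j) \<le> (case x of (i, j) \<Rightarrow> w i * w j * B.cv i j)"
        using x by (simp add: mult_left_mono)
    qed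
    then show "SIX d w M F X \<le> SIX d w Ms F Xs" unfolding SIXa SIXb using Ppos by (simp add: divide_right_mono)
  qed
  have lower: "L \<le> SIX d w M F X"
    unfolding L_def SIX_Q using key den by (intro divide_right_mono) auto
  have terms_nonneg: "\<forall>x\<in>pairs_lt d. 0 \<le> (case x of (i, j) \<Rightarrow> w i * w j * (1/12 - A.cv i j))"
  proof
    fix x assume "x \<in> pairs_lt d"
    then obtain i j where x: "x = (i, j)" "i < j" "j < d" unfolding pairs_lt_def by auto
    then show "0 \<le> (case x of (i, j) \<Rightarrow> w i * w j * (1/12 - A.cv i j))"
      using wpos A.cv_le[of i j] by (simp add: less_imp_le)
  qed
  have gap: "P / 12 - Sa = (\<Sum>(i, j)\<in>pairs_lt d. w i * w j * (1/12 - A.cv i j))"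
    unfolding P_def Sa_def by (simp add: case_prod_unfold sum_subtractf sum_divide_distrib right_diff_distrib)
  have gap_nonneg: "0 \<le> P / 12 - Sa" unfolding gap by (rule sum_nonneg) (use terms_nonneg in auto)
  have upper: "SIX d w M F X \<le> 1" unfolding SIXa using gap_nonneg Ppos by simp
  have part3: "SIX d w M F X = 1 \<longleftrightarrow> comonotonic_copula d C"
  proof -
    have "SIX d w M F X = 1 \<longleftrightarrow> P / 12 - Sa = 0" unfolding SIXa using Ppos by (auto simp: field_simps)
    also have "\<dots> \<longleftrightarrow> (\<forall>x\<in>pairs_lt d. (case x of (i, j) \<Rightarrow> w i * w j * (1/12 - A.cv i j)) = 0)"
      unfolding gap by (rule sum_nonneg_eq_0_iff[OF pairs_finite]) (use terms_nonneg in auto)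
    also have "\<dots> \<longleftrightarrow> (\<forall>i j. i < j \<and> j < d \<longrightarrow> A.cv i j = 1/12)"
    proof
      assume h: "\<forall>x\<in>pairs_lt d. (case x of (i, j) \<Rightarrow> w i * w j * (1/12 - A.cv i j)) = 0"
      show "\<forall>i j. i < j \<and> j < d \<longrightarrow> A.cv i j = 1/12"
      proof (intro allI impI)
        fix i j assume ij: "i < j \<and> j < d"
        then have "w i * w j * (1/12 - A.cv i j) = 0" using h pairs_iff by fastforce
        moreover have "w i \<noteq> 0" "w j \<noteq> 0" using wpos ij by (metis less_trans order_less_irrefl)+
        ultimately show "A.cv i j = 1/12" by simp
      qed
    next
      assume h: "\<forall>i j. i < j \<and> j < d \<longrightarrow> A.cv i j = 1/12"
      then show "\<forall>x\<in>pairs_lt d. (case x of (i, j) \<Rightarrow> w i * w j * (1/12 - A.cv i j)) = 0"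
        unfolding pairs_lt_def by auto
    qed
    also have "\<dots> \<longleftrightarrow> comonotonic_copula d C"
    proof
      assume h: "\<forall>i j. i < j \<and> j < d \<longrightarrow> A.cv i j = 1/12"
      have ae: "\<forall>i<d. AE v in copula_distr d C. v i = v 0"
      proof (intro allI impI)
        fix i assume i: "i < d"
        show "AE v in copula_distr d C. v i = v 0"
        proof (cases "i = 0")
          case True then show ?thesis by simp
        next
          case False
          then have "A.cv 0 i = 1/12" using h i by auto
          then have "AE v in copula_distr d C. v 0 = v i" using i by (intro A.cv_eq) auto
          then show ?thesis by (auto elim: AE_mp)
        qed
      qed
      show "comonotonic_copula d C"
        unfolding comonotonic_copula_def using A.como2[OF ae] d2 by auto
    next
      assume c: "comonotonic_copula d C"
      show "\<forall>i j. i < j \<and> j < d \<longrightarrow> A.cv i j = 1/12"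
      proof (intro allI impI)
        fix i j assume ij: "i < j \<and> j < d"
        then have ij': "i < d" "j < d" by auto
        have "AE v in copula_distr d C. v i = v j"
          using A.como1[OF _ ij'] c unfolding comonotonic_copula_def by auto
        then have "A.cv i j = A.cv i i" unfolding A.cv_def
          by (intro integral_cong_AE) (use ij' in \<open>auto elim: AE_mp\<close>)
        then show "A.cv i j = 1/12" using A.cv_diag ij' by simp
      qed
    qed
    finally show ?thesis .
  qed
  have part4: "SIX d w M F X = L \<longleftrightarrow> is_CM d (wstar d w) C"
  proof -
    have "SIX d w M F X = L \<longleftrightarrow> A.Q w = lfun d w"
      unfolding SIX_Q L_def using den by (auto simp: field_simps)
    also have "\<dots> \<longleftrightarrow> A.Q (wstar d w) = 0" using key by simp
    also have "\<dots> \<longleftrightarrow> is_CM d (wstar d w) C"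
      unfolding is_CM_def using A.cm_iff[of "wstar d w"] by simp
    finally show ?thesis .
  qed
  show ?thesis using part1 lower upper part3 part4 unfolding L_def by blast
qed

end
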